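(* Let $1\le p<\infty$ and let $d_{w,p}$ be a Lorentz sequence space. Let $J^{\ell_p}$ be the set of all operators $T\in L(d_{w,p})$ that factor through $\ell_p$, i.e. $T=BA$ for some $A\in L(d_{w,p},\ell_p)$ and $B\in L(\ell_p,d_{w,p})$. Then $J^{\ell_p}$ and its norm closure $\overline{J^{\ell_p}}$ are proper (two-sided) ideals in $L(d_{w,p})$.
   Context: Let $1\le p<\infty$ and let $w=(w_n)$ be a real sequence with $w_1=1$, $w_n\downarrow 0$ and $\sum_n w_n=\infty$. The Lorentz sequence space $d_{w,p}$ is the Banach space of all $x=(x_n)\in c_0$ with $\|x\|_{d_{w,p}}=\big(\sum_{n}w_n (x^*_n)^p\big)^{1/p}<\infty$, where $(x^*_n)$ is the non-increasing rearrangement of $(|x_n|)$. $L(X)$ denotes the algebra of bounded linear operators on $X$. An ideal in $L(X)$ is a linear subspace $J$ with $ATB\in J$ whenever $T\in J$, $A,B\in L(X)$; it is proper if $J\ne L(X)$. *)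

theory Defs
  imports "HOL-Analysis.Analysis"
begin

type_synonym seq = "nat \<Rightarrow> real"
type_synonym op = "seq \<Rightarrow> seq"

text \<open>Indices are 0-based: x 0 is the first coordinate, w 0 = w_1.\<close>

definition decr_rearr :: "seq \<Rightarrow> nat \<Rightarrow> real" where
  "decr_rearr x n = Inf {s. 0 \<le> s \<and> finite {k. s < \<bar>x k\<bar>} \<and> card {k. s < \<bar>x k\<bar>} \<le> n}"

definition lorentz_space :: "seq \<Rightarrow> real \<Rightarrow> seq set" where
  "lorentz_space w p = {x. x \<longlonglongrightarrow> 0 \<and> summable (\<lambda>n. w n * decr_rearr x n powr p)}"

definition lorentz_norm :: "seq \<Rightarrow> real \<Rightarrow> seq \<Rightarrow> real" where
  "lorentz_norm w p x = (\<Sum>n. w n * decr_rearr x n powr p) powr (1 / p)"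

definition lp_space :: "real \<Rightarrow> seq set" where
  "lp_space p = {x. summable (\<lambda>n. \<bar>x n\<bar> powr p)}"

definition lp_norm :: "real \<Rightarrow> seq \<Rightarrow> real" where
  "lp_norm p x = (\<Sum>n. \<bar>x n\<bar> powr p) powr (1 / p)"

definition splus :: "seq \<Rightarrow> seq \<Rightarrow> seq" where
  "splus x y = (\<lambda>n. x n + y n)"

definition sminus :: "seq \<Rightarrow> seq \<Rightarrow> seq" where
  "sminus x y = (\<lambda>n. x n - y n)"

definition szero :: seq where
  "szero = (\<lambda>n. 0)"

definition sscale :: "real \<Rightarrow> seq \<Rightarrow> seq" where
  "sscale c x = (\<lambda>n. c * x n)"

text \<open>L(X,Y): bounded linear operators X -> Y, represented extensionally
  (value 0 outside X).\<close>
definition bounded_ops :: "(seq \<Rightarrow> real) \<Rightarrow> seq set \<Rightarrow> (seq \<Rightarrow> real) \<Rightarrow> seq set \<Rightarrow> op set" where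
  "bounded_ops NX X NY Y = {T.
     (\<forall>x\<in>X. T x \<in> Y) \<and>
     (\<forall>x\<in>X. \<forall>y\<in>X. T (splus x y) = splus (T x) (T y)) \<and>
     (\<forall>c. \<forall>x\<in>X. T (sscale c x) = sscale c (T x)) \<and>
     (\<exists>C. \<forall>x\<in>X. NY (T x) \<le> C * NX x) \<and>
     (\<forall>x. x \<notin> X \<longrightarrow> T x = szero)}"

definition op_norm :: "(seq \<Rightarrow> real) \<Rightarrow> seq set \<Rightarrow> (seq \<Rightarrow> real) \<Rightarrow> op \<Rightarrow> real" where
  "op_norm NX X NY T = Sup {NY (T x) | x. x \<in> X \<and> NX x \<le> 1}"

definition is_op_ideal :: "(seq \<Rightarrow> real) \<Rightarrow> seq set \<Rightarrow> op set \<Rightarrow> bool" where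
  "is_op_ideal NX X J \<longleftrightarrow>
     J \<subseteq> bounded_ops NX X NX X \<and>
     (\<lambda>x. szero) \<in> J \<and>
     (\<forall>S\<in>J. \<forall>T\<in>J. (\<lambda>x. splus (S x) (T x)) \<in> J) \<and>
     (\<forall>c. \<forall>T\<in>J. (\<lambda>x. sscale c (T x)) \<in> J) \<and>
     (\<forall>T\<in>J. \<forall>A\<in>bounded_ops NX X NX X. \<forall>B\<in>bounded_ops NX X NX X. A \<circ> T \<circ> B \<in> J)"

definition proper_op_ideal :: "(seq \<Rightarrow> real) \<Rightarrow> seq set \<Rightarrow> op set \<Rightarrow> bool" where
  "proper_op_ideal NX X J \<longleftrightarrow> is_op_ideal NX X J \<and> J \<noteq> bounded_ops NX X NX X"

definition op_closure :: "(seq \<Rightarrow> real) \<Rightarrow> seq set \<Rightarrow> op set \<Rightarrow> op set" where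
  "op_closure NX X J = {T \<in> bounded_ops NX X NX X.
     \<forall>e>0. \<exists>S\<in>J. op_norm NX X NX (\<lambda>x. sminus (T x) (S x)) < e}"

definition factor_lp :: "seq \<Rightarrow> real \<Rightarrow> op set" where
  "factor_lp w p = {B \<circ> A | A B.
     A \<in> bounded_ops (lorentz_norm w p) (lorentz_space w p) (lp_norm p) (lp_space p) \<and>
     B \<in> bounded_ops (lp_norm p) (lp_space p) (lorentz_norm w p) (lorentz_space w p)}"

end

theory Submission
  imports Defs
begin



lemma powr_sum2:
  fixes a b p :: real assumes "0 \<le> a" "0 \<le> b" "0 \<le> p"
  shows "(a+b) powr p \<le> 2 powr p * (a powr p + b powr p)"
proof -
  have "(a+b) powr p \<le> (2 * max a b) powr p"
    by (rule powr_mono2) (use assms in auto)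
  also have "\<dots> = 2 powr p * (max a b) powr p" using assms by (simp add: powr_mult)
  also have "(max a b) powr p \<le> a powr p + b powr p"
    by (cases "a \<le> b") (auto simp: max_def)
  hence "2 powr p * (max a b) powr p \<le> 2 powr p * (a powr p + b powr p)"
    by (intro mult_left_mono) auto
  finally show ?thesis .
qed

lemma abs_add_powr:
  fixes u v p :: real assumes "0 \<le> p"
  shows "\<bar>u+v\<bar> powr p \<le> 2 powr p * (\<bar>u\<bar> powr p + \<bar>v\<bar> powr p)"
proof -
  have "\<bar>u+v\<bar> powr p \<le> (\<bar>u\<bar>+\<bar>v\<bar>) powr p" by (rule powr_mono2) (use assms in auto)
  also have "\<dots> \<le> 2 powr p * (\<bar>u\<bar> powr p + \<bar>v\<bar> powr p)" by (rule powr_sum2) (use assms in auto)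
  finally show ?thesis .
qed

lemma abs_sum_powr:
  fixes a :: "'a \<Rightarrow> real" assumes "finite I" "0 \<le> p"
  shows "\<bar>\<Sum>i\<in>I. a i\<bar> powr p \<le> real (card I) powr p * (\<Sum>i\<in>I. \<bar>a i\<bar> powr p)"
proof (cases "I = {}")
  case True then show ?thesis by simp
next
  case False
  define M where "M = Max ((\<lambda>i. \<bar>a i\<bar>) ` I)"
  have "M \<in> (\<lambda>i. \<bar>a i\<bar>) ` I" unfolding M_def using assms False by (intro Max_in) auto
  then obtain i0 where i0: "i0 \<in> I" "M = \<bar>a i0\<bar>" by auto
  have le: "\<bar>a i\<bar> \<le> M" if "i \<in> I" for i unfolding M_def using assms that by auto
  have "\<bar>\<Sum>i\<in>I. a i\<bar> \<le> (\<Sum>i\<in>I. \<bar>a i\<bar>)" by (rule sum_abs)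
  also have "\<dots> \<le> (\<Sum>i\<in>I. M)" by (rule sum_mono) (use le in auto)
  also have "\<dots> = real (card I) * M" by simp
  finally have "\<bar>\<Sum>i\<in>I. a i\<bar> powr p \<le> (real (card I) * M) powr p"
    by (intro powr_mono2) (use assms in auto)
  also have "\<dots> = real (card I) powr p * M powr p" using i0 by (simp add: powr_mult)
  also have "M powr p \<le> (\<Sum>i\<in>I. \<bar>a i\<bar> powr p)"
    using i0 assms by (auto intro!: member_le_sum)
  hence "real (card I) powr p * M powr p \<le> real (card I) powr p * (\<Sum>i\<in>I. \<bar>a i\<bar> powr p)"
    by (intro mult_left_mono) auto
  finally show ?thesis .
qed

lemma powr_inv1: "0 \<le> (x::real) \<Longrightarrow> 0 < p \<Longrightarrow> (x powr p) powr (1/p) = x"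
  by (simp add: powr_powr)
lemma powr_inv2: "0 \<le> (x::real) \<Longrightarrow> 0 < p \<Longrightarrow> (x powr (1/p)) powr p = x"
  by (simp add: powr_powr)

lemma bounded_partials_summable:
  fixes f :: "nat \<Rightarrow> real"
  assumes "\<And>n. 0 \<le> f n" "\<And>n. sum f {..<n} \<le> B"
  shows "summable f" "suminf f \<le> B"
proof -
  show s: "summable f"
  proof (rule bounded_imp_summable[where B=B])
    fix n show "sum f {..n} \<le> B" using assms(2)[of "Suc n"] by (simp add: lessThan_Suc_atMost)
  qed (use assms in auto)
  show "suminf f \<le> B" by (rule suminf_le_const[OF s assms(2)])
qed

definition bnd :: "seq \<Rightarrow> bool" where "bnd x \<longleftrightarrow> (\<exists>M. \<forall>k. \<bar>x k\<bar> \<le> M)"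

abbreviation drS :: "seq \<Rightarrow> nat \<Rightarrow> real set" where
  "drS x n \<equiv> {s. 0 \<le> s \<and> finite {k. s < \<bar>x k\<bar>} \<and> card {k. s < \<bar>x k\<bar>} \<le> n}"

lemma tendsto_bnd: "x \<longlonglongrightarrow> 0 \<Longrightarrow> bnd x"
  unfolding bnd_def using convergent_imp_Bseq[of x] convergent_def by (auto simp: Bseq_def)

lemma drS_ne: assumes "bnd x" shows "drS x n \<noteq> {}"
proof -
  obtain M where M: "\<And>k. \<bar>x k\<bar> \<le> M" using assms bnd_def by auto
  have e: "{k. max M 0 < \<bar>x k\<bar>} = {}" using M by (auto simp: not_less)
  have "max M 0 \<in> drS x n" unfolding mem_Collect_eq e by simp
  thus ?thesis by blast
qed

lemma drS_bdd: "bdd_below (drS x n)" by (rule bdd_belowI[of _ 0]) auto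

lemma dr_le: "s \<in> drS x n \<Longrightarrow> decr_rearr x n \<le> s"
  unfolding decr_rearr_def by (rule cInf_lower[OF _ drS_bdd])

lemma dr_ge: "bnd x \<Longrightarrow> (\<And>s. s \<in> drS x n \<Longrightarrow> c \<le> s) \<Longrightarrow> c \<le> decr_rearr x n"
  unfolding decr_rearr_def by (rule cInf_greatest[OF drS_ne]) auto

lemma dr_nonneg: "bnd x \<Longrightarrow> 0 \<le> decr_rearr x n"
  by (rule dr_ge) auto

lemma dr_mono: assumes "bnd x" "m \<le> n" shows "decr_rearr x n \<le> decr_rearr x m"
  unfolding decr_rearr_def
  by (rule cInf_superset_mono[OF drS_ne[OF assms(1)] drS_bdd]) (use assms in auto)

lemma dr_coord: assumes "bnd x" shows "\<bar>x k\<bar> \<le> decr_rearr x 0"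
proof (rule dr_ge[OF assms])
  fix s assume "s \<in> drS x 0"
  hence "{k. s < \<bar>x k\<bar>} = {}" by auto
  thus "\<bar>x k\<bar> \<le> s" by (auto simp: not_less)
qed

lemma bnd_add: "bnd x \<Longrightarrow> bnd y \<Longrightarrow> bnd (splus x y)"
  unfolding bnd_def splus_def
  by (metis abs_triangle_ineq add_mono order.trans)

lemma bnd_scale: "bnd x \<Longrightarrow> bnd (sscale c x)"
  unfolding bnd_def sscale_def
  by (metis abs_ge_zero abs_mult mult_left_mono)

lemma dr_add: assumes "bnd x" "bnd y"
  shows "decr_rearr (splus x y) (m+n) \<le> decr_rearr x m + decr_rearr y n"
proof -
  have A: "decr_rearr (splus x y) (m+n) \<le> s1 + s2" if s1: "s1 \<in> drS x m" and s2: "s2 \<in> drS y n" for s1 s2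
  proof (rule dr_le)
    have sub: "{k. s1 + s2 < \<bar>splus x y k\<bar>} \<subseteq> {k. s1 < \<bar>x k\<bar>} \<union> {k. s2 < \<bar>y k\<bar>}"
      unfolding splus_def by auto
    have fin: "finite ({k. s1 < \<bar>x k\<bar>} \<union> {k. s2 < \<bar>y k\<bar>})" using s1 s2 by auto
    have "card {k. s1 + s2 < \<bar>splus x y k\<bar>} \<le> card ({k. s1 < \<bar>x k\<bar>} \<union> {k. s2 < \<bar>y k\<bar>})"
      by (rule card_mono[OF fin sub])
    also have "\<dots> \<le> card {k. s1 < \<bar>x k\<bar>} + card {k. s2 < \<bar>y k\<bar>}" by (rule card_Un_le)
    also have "\<dots> \<le> m + n" using s1 s2 by auto
    finally show "s1 + s2 \<in> drS (splus x y) (m+n)" using s1 s2 finite_subset[OF sub fin] by auto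
  qed
  have "decr_rearr (splus x y) (m+n) - s2 \<le> decr_rearr x m" if s2: "s2 \<in> drS y n" for s2
    using A s2 by (intro dr_ge[OF assms(1)]) force
  hence "decr_rearr (splus x y) (m+n) - decr_rearr x m \<le> decr_rearr y n"
    by (intro dr_ge[OF assms(2)]) force
  thus ?thesis by simp
qed

lemma dr_scale_le: assumes "bnd x" "c \<noteq> 0"
  shows "decr_rearr (sscale c x) n \<le> \<bar>c\<bar> * decr_rearr x n"
proof -
  have "decr_rearr (sscale c x) n / \<bar>c\<bar> \<le> s" if s: "s \<in> drS x n" for s
  proof -
    have eq: "{k. \<bar>c\<bar> * s < \<bar>sscale c x k\<bar>} = {k. s < \<bar>x k\<bar>}"
      using assms(2) by (auto simp: sscale_def abs_mult)
    have "\<bar>c\<bar> * s \<in> drS (sscale c x) n" using s eq by auto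
    hence "decr_rearr (sscale c x) n \<le> \<bar>c\<bar> * s" by (rule dr_le)
    thus ?thesis using assms(2) by (simp add: divide_le_eq mult.commute)
  qed
  hence "decr_rearr (sscale c x) n / \<bar>c\<bar> \<le> decr_rearr x n" by (intro dr_ge[OF assms(1)])
  thus ?thesis using assms(2) by (simp add: divide_le_eq mult.commute)
qed

lemma dr_signs:
  assumes "finite F" "\<And>k. k \<in> F \<Longrightarrow> \<bar>s k\<bar> = 1"
  shows "decr_rearr (\<lambda>k. if k \<in> F then s k else 0) n = (if n < card F then 1 else 0)"
proof -
  let ?x = "\<lambda>k. if k \<in> F then s k else 0"
  have set1: "{k. t < \<bar>?x k\<bar>} = {}" if "1 \<le> t" for t using that assms(2) by auto
  have set2: "{k. t < \<bar>?x k\<bar>} = F" if "0 \<le> t" "t < 1" for t using that assms(2) by auto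
  show ?thesis
  proof (cases "n < card F")
    case True
    have "drS ?x n = {t. 1 \<le> t}"
    proof (intro set_eqI iffI)
      fix t :: real assume "t \<in> drS ?x n"
      hence t: "0 \<le> t" "card {k. t < \<bar>?x k\<bar>} \<le> n" by auto
      show "t \<in> {t. 1 \<le> t}"
      proof (rule ccontr)
        assume "t \<notin> {t. 1 \<le> t}" hence "t < 1" by auto
        thus False using set2[OF t(1)] t(2) True by auto
      qed
    next
      fix t :: real assume "t \<in> {t. 1 \<le> t}" thus "t \<in> drS ?x n" using set1[of t] by auto
    qed
    thus ?thesis using True unfolding decr_rearr_def by (simp add: cInf_atLeast[unfolded atLeast_def])
  next
    case False
    have "drS ?x n = {t. 0 \<le> t}"
    proof (intro set_eqI iffI)
      fix t :: real assume "t \<in> {t. 0 \<le> t}"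
      thus "t \<in> drS ?x n" using set1[of t] set2[of t] False assms(1) by (cases "t < 1") auto
    qed auto
    thus ?thesis using False unfolding decr_rearr_def by (simp add: cInf_atLeast[unfolded atLeast_def])
  qed
qed




locale lor =
  fixes w :: "nat \<Rightarrow> real" and p :: real
  assumes p1: "1 \<le> p" and w0: "w 0 = 1" and wdec: "decseq w" and wlim: "w \<longlonglongrightarrow> 0"
begin

abbreviation "N \<equiv> lorentz_norm w p"
abbreviation "X \<equiv> lorentz_space w p"

lemma p0: "0 < p" using p1 by simp
lemma w_nonneg: "0 \<le> w n" using decseq_ge[OF wdec wlim] .
lemma w_le1: "w n \<le> 1" using decseqD[OF wdec, of 0 n] w0 by simp

lemma N_nonneg: "0 \<le> N x" unfolding lorentz_norm_def by simp

lemma X_bnd: "x \<in> X \<Longrightarrow> bnd x" unfolding lorentz_space_def by (auto intro: tendsto_bnd)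
lemma X_summ: "x \<in> X \<Longrightarrow> summable (\<lambda>n. w n * decr_rearr x n powr p)" unfolding lorentz_space_def by auto
lemma term_nonneg: "0 \<le> w n * decr_rearr x n powr p" using w_nonneg by simp

lemma Npow: assumes "summable (\<lambda>n. w n * decr_rearr x n powr p)"
  shows "N x powr p = (\<Sum>n. w n * decr_rearr x n powr p)"
  unfolding lorentz_norm_def
  by (rule powr_inv2[OF _ p0]) (use assms term_nonneg in \<open>auto intro: suminf_nonneg\<close>)

lemma NpowX: "x \<in> X \<Longrightarrow> N x powr p = (\<Sum>n. w n * decr_rearr x n powr p)"
  using Npow X_summ by blast

lemma coord_le: assumes "x \<in> X" shows "\<bar>x k\<bar> \<le> N x"
proof -
  have "\<bar>x k\<bar> powr p \<le> decr_rearr x 0 powr p"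
    using dr_coord[OF X_bnd[OF assms]] p0 by (intro powr_mono2) auto
  also have "\<dots> = (\<Sum>n\<in>{0}. w n * decr_rearr x n powr p)" using w0 by simp
  also have "\<dots> \<le> (\<Sum>n. w n * decr_rearr x n powr p)"
    by (rule sum_le_suminf[OF X_summ[OF assms]]) (auto intro: term_nonneg)
  finally have "(\<bar>x k\<bar> powr p) powr (1/p) \<le> (\<Sum>n. w n * decr_rearr x n powr p) powr (1/p)"
    using p0 by (intro powr_mono2) auto
  thus ?thesis unfolding lorentz_norm_def using powr_inv1[of "\<bar>x k\<bar>" p] p0 by simp
qed

lemma signs_X:
  assumes "finite F" "\<And>k. k \<in> F \<Longrightarrow> \<bar>s k\<bar> = 1"
  shows "(\<lambda>k. if k \<in> F then s k else 0) \<in> X"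
    "N (\<lambda>k. if k \<in> F then s k else 0) powr p = (\<Sum>n<card F. w n)"
proof -
  let ?x = "\<lambda>k. if k \<in> F then s k else 0"
  have t: "w n * decr_rearr ?x n powr p = (if n < card F then w n else 0)" for n
    using dr_signs[OF assms, where n=n] by simp
  have sm: "summable (\<lambda>n. w n * decr_rearr ?x n powr p)"
    unfolding t by (rule summable_finite[of "{..<card F}"]) auto
  have "(\<Sum>n. w n * decr_rearr ?x n powr p) = (\<Sum>n<card F. w n)"
    unfolding t by (subst suminf_finite[of "{..<card F}"]) auto
  thus "N ?x powr p = (\<Sum>n<card F. w n)" using Npow[OF sm] by simp
  obtain k where "F \<subseteq> {..<k}" using assms(1) finite_nat_iff_bounded by auto
  hence "eventually (\<lambda>n. ?x n = 0) sequentially"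
    by (auto simp: eventually_sequentially intro!: exI[of _ k])
  hence "?x \<longlonglongrightarrow> 0" by (rule tendsto_eventually)
  thus "?x \<in> X" using sm unfolding lorentz_space_def by auto
qed

lemma szero_X: "szero \<in> X" and N_szero: "N szero = 0"
proof -
  have e: "szero = (\<lambda>k. if k \<in> {} then (1::real) else 0)" by (simp add: szero_def)
  show "szero \<in> X" using signs_X(1)[of "{}" "\<lambda>_. 1"] e by simp
  have "N szero powr p = 0" using signs_X(2)[of "{}" "\<lambda>_. 1"] e by simp
  thus "N szero = 0" by simp
qed

lemma scale_X: assumes "x \<in> X"
  shows "sscale c x \<in> X" "N (sscale c x) = \<bar>c\<bar> * N x"
proof -
  have "sscale c x \<in> X \<and> N (sscale c x) = \<bar>c\<bar> * N x"
  proof (cases "c = 0")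
    case True
    hence "sscale c x = szero" by (auto simp: sscale_def szero_def)
    thus ?thesis using szero_X N_szero True by simp
  next
    case False
    have b: "bnd x" using X_bnd[OF assms] .
    have d: "decr_rearr (sscale c x) n = \<bar>c\<bar> * decr_rearr x n" for n
    proof (rule antisym)
      show "decr_rearr (sscale c x) n \<le> \<bar>c\<bar> * decr_rearr x n" by (rule dr_scale_le[OF b False])
      have "sscale (1/c) (sscale c x) = x" using False by (auto simp: sscale_def)
      hence "decr_rearr x n \<le> \<bar>1/c\<bar> * decr_rearr (sscale c x) n"
        using dr_scale_le[OF bnd_scale[OF b, of c], of "1/c" n] False by simp
      thus "\<bar>c\<bar> * decr_rearr x n \<le> decr_rearr (sscale c x) n" using False
        by (simp add: field_simps abs_divide)
    qed
    have t: "w n * decr_rearr (sscale c x) n powr p = \<bar>c\<bar> powr p * (w n * decr_rearr x n powr p)" for n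
      unfolding d using dr_nonneg[OF b] by (simp add: powr_mult)
    have sm: "summable (\<lambda>n. w n * decr_rearr (sscale c x) n powr p)"
      unfolding t by (intro summable_mult X_summ[OF assms])
    have lim: "sscale c x \<longlonglongrightarrow> 0" using assms unfolding lorentz_space_def sscale_def
      by (auto intro: tendsto_mult_right_zero)
    have "N (sscale c x) = ((\<bar>c\<bar> powr p) * (\<Sum>n. w n * decr_rearr x n powr p)) powr (1/p)"
      unfolding lorentz_norm_def t by (subst suminf_mult) (auto intro: X_summ[OF assms])
    also have "\<dots> = \<bar>c\<bar> * N x" unfolding lorentz_norm_def
      by (subst powr_mult) (use p0 in \<open>auto simp: powr_powr suminf_nonneg X_summ[OF assms] term_nonneg\<close>)
    finally show ?thesis using sm lim unfolding lorentz_space_def by auto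
  qed
  thus "sscale c x \<in> X" "N (sscale c x) = \<bar>c\<bar> * N x" by auto
qed

lemma sum_div2: "(\<Sum>n<2*(M::nat). g (n div 2)) = 2 * (\<Sum>k<M. g k :: real)"
  by (induction M) auto

definition "KX = 2 powr ((p+2)/p)"

lemma add_X: assumes x: "x \<in> X" and y: "y \<in> X"
  shows "splus x y \<in> X" "N (splus x y) \<le> KX * (N x + N y)"
proof -
  have bx: "bnd x" and bdy: "bnd y" using X_bnd x y by auto
  define g where "g k = w k * decr_rearr x k powr p + w k * decr_rearr y k powr p" for k
  have gn: "0 \<le> g k" for k unfolding g_def using term_nonneg by (simp add: add_nonneg_nonneg)
  have sg: "summable g" unfolding g_def using X_summ x y by (intro summable_add) auto
  have sumg: "suminf g = N x powr p + N y powr p" unfolding g_def NpowX[OF x] NpowX[OF y]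
    by (rule suminf_add[symmetric]) (use X_summ x y in auto)
  have tb: "w n * decr_rearr (splus x y) n powr p \<le> 2 powr p * g (n div 2)" for n
  proof -
    have "decr_rearr (splus x y) n = decr_rearr (splus x y) (n div 2 + (n - n div 2))" by simp
    also have "\<dots> \<le> decr_rearr x (n div 2) + decr_rearr y (n - n div 2)" by (rule dr_add[OF bx bdy])
    also have "\<dots> \<le> decr_rearr x (n div 2) + decr_rearr y (n div 2)" using dr_mono[OF bdy, of "n div 2" "n - n div 2"] by simp
    finally have "decr_rearr (splus x y) n powr p \<le> (decr_rearr x (n div 2) + decr_rearr y (n div 2)) powr p"
      using dr_nonneg[OF bnd_add[OF bx bdy]] p0 by (intro powr_mono2) auto
    also have "\<dots> \<le> 2 powr p * (decr_rearr x (n div 2) powr p + decr_rearr y (n div 2) powr p)"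
      using dr_nonneg[OF bx] dr_nonneg[OF bdy] p0 by (intro powr_sum2) auto
    finally have A: "decr_rearr (splus x y) n powr p \<le> 2 powr p * (decr_rearr x (n div 2) powr p + decr_rearr y (n div 2) powr p)" .
    have wle: "w n \<le> w (n div 2)" by (rule decseqD[OF wdec]) auto
    have "w n * decr_rearr (splus x y) n powr p \<le> w (n div 2) * (2 powr p * (decr_rearr x (n div 2) powr p + decr_rearr y (n div 2) powr p))"
      using A wle w_nonneg by (intro mult_mono) auto
    thus ?thesis unfolding g_def by (simp add: algebra_simps)
  qed
  have ps: "(\<Sum>n<M. w n * decr_rearr (splus x y) n powr p) \<le> 2 powr p * (2 * suminf g)" for M
  proof -
    have "(\<Sum>n<M. w n * decr_rearr (splus x y) n powr p) \<le> (\<Sum>n<M. 2 powr p * g (n div 2))"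
      by (rule sum_mono[OF tb])
    also have "\<dots> \<le> (\<Sum>n<2*M. 2 powr p * g (n div 2))"
      by (rule sum_mono2) (use gn in auto)
    also have "\<dots> = 2 powr p * (2 * (\<Sum>k<M. g k))" by (simp add: sum_distrib_left[symmetric] sum_div2)
    also have "\<dots> \<le> 2 powr p * (2 * suminf g)"
      using sum_le_suminf[OF sg, of "{..<M}"] gn by (intro mult_left_mono) auto
    finally show ?thesis .
  qed
  have sm: "summable (\<lambda>n. w n * decr_rearr (splus x y) n powr p)"
    and le: "(\<Sum>n. w n * decr_rearr (splus x y) n powr p) \<le> 2 powr p * (2 * suminf g)"
    using bounded_partials_summable[OF term_nonneg ps] by auto
  have lim: "splus x y \<longlonglongrightarrow> 0" using x y unfolding lorentz_space_def splus_def
    by (auto intro: tendsto_add_zero)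
  show "splus x y \<in> X" using sm lim unfolding lorentz_space_def by auto
  have nx: "0 \<le> N x" "0 \<le> N y" using N_nonneg by auto
  have "N x powr p + N y powr p \<le> 2 * (N x + N y) powr p"
    using nx p0 by (smt (verit) powr_mono2)
  hence h2: "2 powr p * (2 * suminf g) \<le> 2 powr p * (2 * (2 * (N x + N y) powr p))"
    unfolding sumg by (intro mult_left_mono) auto
  have e4: "2 powr (p+2) = 2 powr p * 4" by (simp add: powr_add)
  have "N (splus x y) powr p \<le> 2 powr p * (2 * (2 * (N x + N y) powr p))"
    unfolding Npow[OF sm] using le h2 by linarith
  also have "\<dots> = 2 powr (p+2) * (N x + N y) powr p" unfolding e4 by simp
  finally have "N (splus x y) powr p \<le> 2 powr (p+2) * (N x + N y) powr p" .
  hence "(N (splus x y) powr p) powr (1/p) \<le> (2 powr (p+2) * (N x + N y) powr p) powr (1/p)"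
    using p0 by (intro powr_mono2) auto
  also have "\<dots> = KX * (N x + N y)" unfolding KX_def using nx p0
    by (simp add: powr_mult powr_powr)
  finally show "N (splus x y) \<le> KX * (N x + N y)" using powr_inv1[OF N_nonneg p0] by simp
qed

lemma KX_pos: "0 < KX" unfolding KX_def by simp

end



definition evs :: "seq \<Rightarrow> seq" where "evs y = (\<lambda>n. y (2*n))"
definition ods :: "seq \<Rightarrow> seq" where "ods y = (\<lambda>n. y (2*n+1))"
definition il :: "seq \<Rightarrow> seq \<Rightarrow> seq" where "il a b = (\<lambda>j. if even j then a (j div 2) else b (j div 2))"

lemma evs_il[simp]: "evs (il a b) = a" and ods_il[simp]: "ods (il a b) = b"
  by (auto simp: evs_def ods_def il_def)

lemma il_zero: "il szero szero = szero" by (auto simp: il_def szero_def)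

lemma sum_split_eo: "(\<Sum>j<2*M. f j) = (\<Sum>n<M. f (2*n)) + (\<Sum>n<M. f (2*n+1::nat)::real)"
  by (induction M) auto

lemma sscale0_szero: "sscale 0 x = szero" by (auto simp: sscale_def szero_def)

lemma bo_I:
  assumes "\<And>x. x \<in> X \<Longrightarrow> T x \<in> Y"
    "\<And>x y. x \<in> X \<Longrightarrow> y \<in> X \<Longrightarrow> T (splus x y) = splus (T x) (T y)"
    "\<And>c x. x \<in> X \<Longrightarrow> T (sscale c x) = sscale c (T x)"
    "\<And>x. x \<in> X \<Longrightarrow> NY (T x) \<le> C * NX x"
    "\<And>x. x \<notin> X \<Longrightarrow> T x = szero"
  shows "T \<in> bounded_ops NX X NY Y"
  unfolding bounded_ops_def using assms by blast

lemma bo_D: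
  assumes "T \<in> bounded_ops NX X NY Y"
  shows "\<And>x. x \<in> X \<Longrightarrow> T x \<in> Y"
    "\<And>x y. x \<in> X \<Longrightarrow> y \<in> X \<Longrightarrow> T (splus x y) = splus (T x) (T y)"
    "\<And>c x. x \<in> X \<Longrightarrow> T (sscale c x) = sscale c (T x)"
    "\<And>x. x \<notin> X \<Longrightarrow> T x = szero"
  using assms unfolding bounded_ops_def by blast+

lemma bo_zero: assumes "T \<in> bounded_ops NX X NY Y" "szero \<in> X" shows "T szero = szero"
proof -
  have "T (sscale 0 szero) = sscale 0 (T szero)" using assms unfolding bounded_ops_def by blast
  thus ?thesis by (simp add: sscale0_szero)
qed

lemma bo_const: assumes "T \<in> bounded_ops NX X NY Y" "\<And>x. 0 \<le> NX x"
  shows "\<exists>C>0. \<forall>x\<in>X. NY (T x) \<le> C * NX x"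
proof -
  obtain C where C: "\<forall>x\<in>X. NY (T x) \<le> C * NX x" using assms(1) unfolding bounded_ops_def by blast
  have "\<forall>x\<in>X. NY (T x) \<le> (max C 0 + 1) * NX x"
  proof
    fix x assume "x \<in> X"
    hence "NY (T x) \<le> C * NX x" using C by auto
    also have "\<dots> \<le> (max C 0 + 1) * NX x" using assms(2)[of x] by (intro mult_right_mono) auto
    finally show "NY (T x) \<le> (max C 0 + 1) * NX x" .
  qed
  thus ?thesis by (intro exI[of _ "max C 0 + 1"]) auto
qed

lemma bo_comp:
  assumes T1: "T1 \<in> bounded_ops NX X NY Y" and T2: "T2 \<in> bounded_ops NY Y NZ Z"
    and z: "szero \<in> Y" and nn: "\<And>y. 0 \<le> NY y"
  shows "T2 \<circ> T1 \<in> bounded_ops NX X NZ Z"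
proof -
  obtain C1 where C1: "\<forall>x\<in>X. NY (T1 x) \<le> C1 * NX x" using T1 unfolding bounded_ops_def by blast
  obtain C2 where "C2 > 0" and C2: "\<forall>y\<in>Y. NZ (T2 y) \<le> C2 * NY y" using bo_const[OF T2 nn] by blast
  have m: "\<forall>x\<in>X. T1 x \<in> Y" using T1 unfolding bounded_ops_def by blast
  have b: "\<forall>x\<in>X. NZ (T2 (T1 x)) \<le> (C2 * C1) * NX x"
  proof
    fix x assume x: "x \<in> X"
    have "NZ (T2 (T1 x)) \<le> C2 * NY (T1 x)" using C2 m x by auto
    also have "\<dots> \<le> C2 * (C1 * NX x)" using C1 x \<open>C2 > 0\<close> by (intro mult_left_mono) auto
    finally show "NZ (T2 (T1 x)) \<le> (C2 * C1) * NX x" by simp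
  qed
  show ?thesis
  proof (rule bo_I[where C="C2*C1"])
    fix x assume x: "x \<in> X"
    show "(T2 \<circ> T1) x \<in> Z" using x m bo_D(1)[OF T2] by simp
    show "NZ ((T2 \<circ> T1) x) \<le> C2 * C1 * NX x" using b x by simp
    fix y assume y: "y \<in> X"
    show "(T2 \<circ> T1) (splus x y) = splus ((T2 \<circ> T1) x) ((T2 \<circ> T1) y)"
      using x y m bo_D(2)[OF T1] bo_D(2)[OF T2] by simp
  next
    fix c x assume x: "x \<in> X"
    show "(T2 \<circ> T1) (sscale c x) = sscale c ((T2 \<circ> T1) x)"
      using x m bo_D(3)[OF T1] bo_D(3)[OF T2] by simp
  next
    fix x assume "x \<notin> X"
    thus "(T2 \<circ> T1) x = szero" using bo_D(4)[OF T1] bo_zero[OF T2 z] by simp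
  qed
qed

context lor begin

abbreviation "Q z \<equiv> (\<Sum>n. \<bar>z n\<bar> powr p)"
abbreviation "LP \<equiv> lp_space p"
abbreviation "NP \<equiv> lp_norm p"

lemma NP_nonneg: "0 \<le> NP z" unfolding lp_norm_def by simp

lemma lp_Q: "z \<in> LP \<Longrightarrow> NP z powr p = Q z"
  unfolding lp_norm_def lp_space_def by (rule powr_inv2[OF _ p0]) (auto intro: suminf_nonneg)

lemma Q_le_iff: assumes "z \<in> LP" "0 \<le> c" "Q z \<le> c powr p" shows "NP z \<le> c"
proof -
  have "NP z powr p \<le> c powr p" using lp_Q[OF assms(1)] assms(3) by simp
  hence h: "(NP z powr p) powr (1/p) \<le> (c powr p) powr (1/p)" by (rule powr_mono2[rotated 2]) (use p0 in auto)
  have a: "(NP z powr p) powr (1/p) = NP z" by (rule powr_inv1[OF NP_nonneg p0])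
  have b: "(c powr p) powr (1/p) = c" by (rule powr_inv1[OF assms(2) p0])
  show ?thesis using h unfolding a b .
qed

lemma Q_le_NP: assumes "z \<in> LP" "NP z \<le> c" shows "Q z \<le> c powr p"
proof -
  have "NP z powr p \<le> c powr p" using assms(2) NP_nonneg p0 by (intro powr_mono2) auto
  thus ?thesis using lp_Q[OF assms(1)] by simp
qed

lemma lp_coord: assumes "z \<in> LP" shows "\<bar>z j\<bar> \<le> NP z"
proof -
  have "\<bar>z j\<bar> powr p \<le> Q z"
    using sum_le_suminf[of "\<lambda>n. \<bar>z n\<bar> powr p" "{j}"] assms unfolding lp_space_def by auto
  hence "(\<bar>z j\<bar> powr p) powr (1/p) \<le> (Q z) powr (1/p)" using p0 by (intro powr_mono2) auto
  thus ?thesis unfolding lp_norm_def using powr_inv1[of "\<bar>z j\<bar>" p] p0 by simp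
qed

lemma lp_szero: "szero \<in> LP" "NP szero = 0"
  unfolding lp_space_def lp_norm_def szero_def by auto

lemma lp_scale: "z \<in> LP \<Longrightarrow> sscale c z \<in> LP"
  unfolding lp_space_def sscale_def by (auto simp: abs_mult powr_mult intro: summable_mult)

lemma lp_add: assumes "z1 \<in> LP" "z2 \<in> LP" shows "splus z1 z2 \<in> LP"
proof -
  have "summable (\<lambda>n. 2 powr p * (\<bar>z1 n\<bar> powr p + \<bar>z2 n\<bar> powr p))"
    using assms unfolding lp_space_def by (intro summable_mult summable_add) auto
  thus ?thesis unfolding lp_space_def splus_def mem_Collect_eq
    by (rule summable_comparison_test'[where N=0]) (use abs_add_powr p0 in auto)
qed

lemma lp_evs: assumes "y \<in> LP" shows "evs y \<in> LP" "NP (evs y) \<le> NP y"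
   "ods y \<in> LP" "NP (ods y) \<le> NP y"
proof -
  have sy: "summable (\<lambda>n. \<bar>y n\<bar> powr p)" using assms unfolding lp_space_def by auto
  have ps: "(\<Sum>n<M. \<bar>y (2*n)\<bar> powr p) \<le> Q y" "(\<Sum>n<M. \<bar>y (2*n+1)\<bar> powr p) \<le> Q y" for M
  proof -
    have "(\<Sum>n<M. \<bar>y (2*n)\<bar> powr p) + (\<Sum>n<M. \<bar>y (2*n+1)\<bar> powr p) \<le> Q y"
      using sum_split_eo[where M=M and f="\<lambda>j. \<bar>y j\<bar> powr p"] sum_le_suminf[OF sy, of "{..<2*M}"] by auto
    moreover have "0 \<le> (\<Sum>n<M. \<bar>y (2*n)\<bar> powr p)" "0 \<le> (\<Sum>n<M. \<bar>y (2*n+1)\<bar> powr p)"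
      by (auto intro: sum_nonneg)
    ultimately show "(\<Sum>n<M. \<bar>y (2*n)\<bar> powr p) \<le> Q y" "(\<Sum>n<M. \<bar>y (2*n+1)\<bar> powr p) \<le> Q y" by linarith+
  qed
  have ps1: "(\<Sum>n<M. \<bar>evs y n\<bar> powr p) \<le> Q y" "(\<Sum>n<M. \<bar>ods y n\<bar> powr p) \<le> Q y" for M
    using ps unfolding evs_def ods_def by auto
  have e: "summable (\<lambda>n. \<bar>evs y n\<bar> powr p)" "Q (evs y) \<le> Q y"
    using bounded_partials_summable[of "\<lambda>n. \<bar>evs y n\<bar> powr p", OF _ ps1(1)] by auto
  have o: "summable (\<lambda>n. \<bar>ods y n\<bar> powr p)" "Q (ods y) \<le> Q y"
    using bounded_partials_summable[of "\<lambda>n. \<bar>ods y n\<bar> powr p", OF _ ps1(2)] by auto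
  show "evs y \<in> LP" "ods y \<in> LP" using e o unfolding lp_space_def by auto
  show "NP (evs y) \<le> NP y" "NP (ods y) \<le> NP y" using e o unfolding lp_norm_def using p0
    by (auto intro!: powr_mono2 suminf_nonneg)
qed

lemma lp_il: assumes "a \<in> LP" "b \<in> LP" shows "il a b \<in> LP" "Q (il a b) \<le> Q a + Q b"
proof -
  have sa: "summable (\<lambda>n. \<bar>a n\<bar> powr p)" and sb: "summable (\<lambda>n. \<bar>b n\<bar> powr p)"
    using assms unfolding lp_space_def by auto
  have ps: "(\<Sum>j<M. \<bar>il a b j\<bar> powr p) \<le> Q a + Q b" for M
  proof -
    have "(\<Sum>j<M. \<bar>il a b j\<bar> powr p) \<le> (\<Sum>j<2*M. \<bar>il a b j\<bar> powr p)"
      by (rule sum_mono2) auto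
    also have "\<dots> = (\<Sum>n<M. \<bar>a n\<bar> powr p) + (\<Sum>n<M. \<bar>b n\<bar> powr p)"
      unfolding sum_split_eo by (simp add: il_def)
    also have "\<dots> \<le> Q a + Q b"
      using sum_le_suminf[OF sa, of "{..<M}"] sum_le_suminf[OF sb, of "{..<M}"] by auto
    finally show ?thesis .
  qed
  show "il a b \<in> LP" "Q (il a b) \<le> Q a + Q b"
    using bounded_partials_summable[of "\<lambda>j. \<bar>il a b j\<bar> powr p", OF _ ps] unfolding lp_space_def by auto
qed

abbreviation "L \<equiv> bounded_ops N X N X"

lemma N_zero_imp: assumes "x \<in> X" "N x = 0" shows "x = szero"
  using coord_le[OF assms(1)] assms(2) by (auto simp: szero_def)

lemma L_add: assumes S: "S \<in> L" and T: "T \<in> L" shows "(\<lambda>x. splus (S x) (T x)) \<in> L"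
proof -
  obtain C1 where "C1 > 0" and C1: "\<forall>x\<in>X. N (S x) \<le> C1 * N x" using bo_const[OF S N_nonneg] by blast
  obtain C2 where "C2 > 0" and C2: "\<forall>x\<in>X. N (T x) \<le> C2 * N x" using bo_const[OF T N_nonneg] by blast
  have mS: "\<forall>x\<in>X. S x \<in> X" and mT: "\<forall>x\<in>X. T x \<in> X" using S T unfolding bounded_ops_def by auto
  have b: "\<forall>x\<in>X. N (splus (S x) (T x)) \<le> (KX * (C1 + C2)) * N x"
  proof
    fix x assume x: "x \<in> X"
    have "N (splus (S x) (T x)) \<le> KX * (N (S x) + N (T x))" using add_X(2) mS mT x by auto
    also have "\<dots> \<le> KX * (C1 * N x + C2 * N x)" using C1 C2 x KX_pos
      by (intro mult_left_mono add_mono) auto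
    finally show "N (splus (S x) (T x)) \<le> (KX * (C1 + C2)) * N x" by (simp add: algebra_simps)
  qed
  show ?thesis
  proof (rule bo_I[where C="KX * (C1 + C2)"])
    fix x assume x: "x \<in> X"
    show "splus (S x) (T x) \<in> X" using x mS mT add_X(1) by auto
    show "N (splus (S x) (T x)) \<le> KX * (C1 + C2) * N x" using b x by auto
    fix y assume y: "y \<in> X"
    show "splus (S (splus x y)) (T (splus x y)) = splus (splus (S x) (T x)) (splus (S y) (T y))"
      using x y bo_D(2)[OF S] bo_D(2)[OF T] by (simp add: splus_def fun_eq_iff)
  next
    fix c x assume x: "x \<in> X"
    show "splus (S (sscale c x)) (T (sscale c x)) = sscale c (splus (S x) (T x))"
      using x bo_D(3)[OF S] bo_D(3)[OF T] by (simp add: splus_def sscale_def fun_eq_iff algebra_simps)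
  next
    fix x assume "x \<notin> X"
    thus "splus (S x) (T x) = szero" using bo_D(4)[OF S] bo_D(4)[OF T] by (simp add: splus_def szero_def)
  qed
qed

lemma L_scale: assumes T: "T \<in> L" shows "(\<lambda>x. sscale c (T x)) \<in> L"
proof -
  obtain C where C: "\<forall>x\<in>X. N (T x) \<le> C * N x" using T unfolding bounded_ops_def by blast
  have mT: "\<forall>x\<in>X. T x \<in> X" using T unfolding bounded_ops_def by auto
  have b: "\<forall>x\<in>X. N (sscale c (T x)) \<le> (\<bar>c\<bar> * C) * N x"
    using scale_X(2) mT C by (auto simp: mult.assoc intro: mult_left_mono)
  show ?thesis
  proof (rule bo_I[where C="\<bar>c\<bar> * C"])
    fix x assume x: "x \<in> X"
    show "sscale c (T x) \<in> X" using x mT scale_X(1) by auto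
    show "N (sscale c (T x)) \<le> \<bar>c\<bar> * C * N x" using b x by auto
    fix y assume y: "y \<in> X"
    show "sscale c (T (splus x y)) = splus (sscale c (T x)) (sscale c (T y))"
      using x y bo_D(2)[OF T] by (simp add: splus_def sscale_def fun_eq_iff algebra_simps)
  next
    fix d x assume x: "x \<in> X"
    show "sscale c (T (sscale d x)) = sscale d (sscale c (T x))"
      using x bo_D(3)[OF T] by (simp add: sscale_def fun_eq_iff algebra_simps)
  next
    fix x assume "x \<notin> X"
    thus "sscale c (T x) = szero" using bo_D(4)[OF T] by (simp add: sscale_def szero_def)
  qed
qed

lemma sminus_eq: "sminus u v = splus u (sscale (-1) v)"
  by (auto simp: sminus_def splus_def sscale_def)

lemma L_minus: "S \<in> L \<Longrightarrow> T \<in> L \<Longrightarrow> (\<lambda>x. sminus (S x) (T x)) \<in> L"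
  unfolding sminus_eq using L_add L_scale by blast

definition "Id_X = (\<lambda>x. if x \<in> X then x else szero)"

lemma Id_L: "Id_X \<in> L"
  by (rule bo_I[where C=1]) (auto simp: Id_X_def add_X(1) scale_X(1))

lemma opn_le: assumes T: "T \<in> L" and e: "op_norm N X N T < e" and x: "x \<in> X"
  shows "N (T x) \<le> e * N x"
proof (cases "N x = 0")
  case True
  hence "x = szero" using N_zero_imp x by auto
  thus ?thesis using bo_zero[OF T szero_X] N_szero True by simp
next
  case False
  hence nx: "N x > 0" using N_nonneg[of x] by auto
  obtain C where "C > 0" and C: "\<forall>x\<in>X. N (T x) \<le> C * N x" using bo_const[OF T N_nonneg] by blast
  let ?S = "{N (T x) |x. x \<in> X \<and> N x \<le> 1}"
  have bdd: "bdd_above ?S" using C \<open>C > 0\<close> by (intro bdd_aboveI[of _ C]) (force intro: order.trans mult_left_le)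
  let ?x = "sscale (1 / N x) x"
  have x1: "?x \<in> X" "N ?x = 1" using scale_X[OF x, of "1/N x"] nx by auto
  have "T ?x = sscale (1 / N x) (T x)" using T x unfolding bounded_ops_def by blast
  hence "N (T ?x) = N (T x) / N x" using scale_X(2)[of "T x" "1 / N x"] T x nx
    unfolding bounded_ops_def by auto
  moreover have "N (T ?x) \<le> op_norm N X N T" unfolding op_norm_def
    by (rule cSup_upper[OF _ bdd]) (use x1 in auto)
  ultimately have "N (T x) / N x < e" using e by simp
  thus ?thesis using nx by (simp add: divide_less_eq)
qed

lemma opn_bound: assumes "\<And>x. x \<in> X \<Longrightarrow> N (T x) \<le> c * N x" "0 \<le> c"
  shows "op_norm N X N T \<le> c"
  unfolding op_norm_def
proof (rule cSup_least)
  show "{N (T x) |x. x \<in> X \<and> N x \<le> 1} \<noteq> {}" using szero_X N_szero by auto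
  fix y assume "y \<in> {N (T x) |x. x \<in> X \<and> N x \<le> 1}"
  then obtain x where "x \<in> X" "N x \<le> 1" "y = N (T x)" by auto
  thus "y \<le> c" using assms(1)[of x] assms(2) by (smt (verit) mult_left_le)
qed

end



definition sv :: "nat set \<Rightarrow> (nat \<Rightarrow> real) \<Rightarrow> seq" where
  "sv F s = (\<lambda>k. if k \<in> F then s k else 0)"

definition ee :: "nat \<Rightarrow> seq" where "ee n = sv {n} (\<lambda>_. 1)"

lemma split_lessThan: "a \<le> b \<Longrightarrow> sum f {..<b} = sum f {..<a} + sum f {a..<(b::nat)}"
  by (metis atLeast0LessThan le0 sum.atLeastLessThan_concat)

lemma sum_blocks:
  fixes J :: "nat \<Rightarrow> nat"
  assumes "\<And>k. J k \<le> J (Suc k)" "J 0 = 0"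
  shows "sum f {..<J m} = (\<Sum>k<m. sum f {J k..<J (Suc k)})"
proof (induction m)
  case 0 then show ?case using assms(2) by simp
next
  case (Suc m)
  then show ?case using split_lessThan[OF assms(1)[of m], of f] by simp
qed

context lor begin

lemma sv_X: "finite F \<Longrightarrow> (\<And>k. k \<in> F \<Longrightarrow> \<bar>s k\<bar> = 1) \<Longrightarrow> sv F s \<in> X"
  unfolding sv_def by (rule signs_X(1))

lemma sv_N: assumes "finite F" "\<And>k. k \<in> F \<Longrightarrow> \<bar>s k\<bar> = 1"
  shows "N (sv F s) = (\<Sum>n<card F. w n) powr (1/p)"
proof -
  have "N (sv F s) powr p = (\<Sum>n<card F. w n)" unfolding sv_def by (rule signs_X(2)[OF assms])
  hence "(N (sv F s) powr p) powr (1/p) = (\<Sum>n<card F. w n) powr (1/p)" by simp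
  thus ?thesis using powr_inv1[OF N_nonneg p0] by simp
qed

lemma ee_X: "ee n \<in> X" unfolding ee_def by (rule sv_X) auto
lemma ee_N: "N (ee n) = 1" unfolding ee_def using sv_N[of "{n}" "\<lambda>_. 1"] w0 by simp
lemma ee_n: "ee n n = 1" by (simp add: ee_def sv_def)

lemma lin_sum:
  assumes A: "A \<in> bounded_ops N X NY Y" and F: "finite F" and s: "\<And>k. k \<in> F \<Longrightarrow> \<bar>s k\<bar> = 1"
  shows "A (sv F s) j = (\<Sum>n\<in>F. s n * A (ee n) j)"
  using F s
proof (induction F rule: finite_induct)
  case empty
  have "sv {} s = szero" by (simp add: sv_def szero_def)
  thus ?case using bo_zero[OF A szero_X] by (simp add: szero_def)
next
  case (insert a F)
  have e: "sv (insert a F) s = splus (sscale (s a) (ee a)) (sv F s)"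
    using insert(2) by (auto simp: sv_def ee_def splus_def sscale_def fun_eq_iff)
  have xF: "sv F s \<in> X" using sv_X insert by auto
  have "A (sv (insert a F) s) = splus (A (sscale (s a) (ee a))) (A (sv F s))"
    unfolding e by (rule bo_D(2)[OF A scale_X(1)[OF ee_X] xF])
  also have "A (sscale (s a) (ee a)) = sscale (s a) (A (ee a))" by (rule bo_D(3)[OF A ee_X])
  finally show ?case using insert by (simp add: splus_def sscale_def)
qed

lemma W_ge1: "1 \<le> m \<Longrightarrow> 1 \<le> (\<Sum>n<m. w n)"
proof -
  assume "1 \<le> m"
  hence "(\<Sum>n<m. w n) = w 0 + (\<Sum>n\<in>{1..<m}. w n)"
    using split_lessThan[of 1 m w] by simp
  moreover have "0 \<le> (\<Sum>n\<in>{1..<m}. w n)" using w_nonneg by (simp add: sum_nonneg)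
  ultimately show ?thesis using w0 by simp
qed

lemma cesaro: fixes e :: real assumes "0 < e" shows "\<exists>m\<ge>M0. 1 \<le> m \<and> (\<Sum>n<m. w n) \<le> e * real m"
proof -
  have "\<forall>r>0. \<exists>no. \<forall>n\<ge>no. norm (w n - 0) < r" using wlim unfolding LIMSEQ_iff .
  then obtain K where K0: "\<forall>n\<ge>K. norm (w n - 0) < e/2" using half_gt_zero[OF assms] by blast
  have K: "w n < e/2" if "n \<ge> K" for n using K0 that by auto
  define m where "m = max (max M0 1) (max K (nat \<lceil>2 * K / e\<rceil>))"
  have mK: "K \<le> m" "M0 \<le> m" "1 \<le> m" unfolding m_def by auto
  have mK2: "2 * K / e \<le> m" unfolding m_def by linarith
  have "(\<Sum>n<m. w n) = (\<Sum>n<K. w n) + (\<Sum>n\<in>{K..<m}. w n)" by (rule split_lessThan[OF mK(1)])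
  also have "(\<Sum>n<K. w n) \<le> (\<Sum>n<K. 1)" by (rule sum_mono) (use w_le1 in auto)
  also have "(\<Sum>n\<in>{K..<m}. w n) \<le> (\<Sum>n\<in>{K..<m}. e/2)" by (rule sum_mono) (use K less_imp_le in auto)
  also have "(\<Sum>n\<in>{K..<m}. e/2) \<le> m * (e/2)" using assms by simp
  finally have "(\<Sum>n<m. w n) \<le> K + m * (e/2)" by simp
  moreover have "K \<le> m * (e/2)" using mK2 assms by (simp add: field_simps)
  ultimately have "(\<Sum>n<m. w n) \<le> e * m" using mult.commute[of "real m" e] by linarith
  thus ?thesis using mK by auto
qed

lemma bo_constP: "A \<in> bounded_ops N X NP LP \<Longrightarrow> \<exists>C>0. \<forall>x\<in>X. NP (A x) \<le> C * N x"
  by (rule bo_const[OF _ N_nonneg])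

lemma coord_to_0:
  assumes A: "A \<in> bounded_ops N X NP LP"
  shows "(\<lambda>n. A (ee n) j) \<longlonglongrightarrow> 0"
proof (rule ccontr)
  assume "\<not> ?thesis"
  then obtain d where d: "d > 0" and fr: "\<And>no. \<exists>n\<ge>no. d \<le> \<bar>A (ee n) j\<bar>"
    unfolding LIMSEQ_iff by (auto simp: not_less)
  let ?I = "{n. d \<le> \<bar>A (ee n) j\<bar>}"
  have inf: "infinite ?I" unfolding infinite_nat_iff_unbounded_le using fr by auto
  obtain CA where CA: "CA > 0" "\<forall>x\<in>X. NP (A x) \<le> CA * N x" using bo_constP[OF A] by blast
  obtain m where m: "1 \<le> m" "(\<Sum>n<m. w n) \<le> (d / (2*CA)) * m"
    using cesaro[of "d/(2*CA)" 0] d CA by auto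
  obtain F where F: "finite F" "card F = m" "F \<subseteq> ?I" using infinite_arbitrarily_large[OF inf] by blast
  define s where "s n = (if 0 \<le> A (ee n) j then 1 else (-1::real))" for n
  have s1: "\<And>k. k \<in> F \<Longrightarrow> \<bar>s k\<bar> = 1" by (simp add: s_def)
  let ?W = "(\<Sum>n<m. w n)"
  have xF: "sv F s \<in> X" using sv_X[of F s] F(1) s1 by blast
  have "A (sv F s) j = (\<Sum>n\<in>F. s n * A (ee n) j)" by (rule lin_sum[OF A F(1) s1])
  also have "\<dots> = (\<Sum>n\<in>F. \<bar>A (ee n) j\<bar>)" by (rule sum.cong) (auto simp: s_def)
  finally have zj: "A (sv F s) j = (\<Sum>n\<in>F. \<bar>A (ee n) j\<bar>)" .
  have "(\<Sum>n\<in>F. d) \<le> (\<Sum>n\<in>F. \<bar>A (ee n) j\<bar>)" by (rule sum_mono) (use F in auto)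
  hence lo: "m * d \<le> A (sv F s) j" using zj F by simp
  have Wb: "N (sv F s) \<le> ?W"
  proof -
    have "N (sv F s) = ?W powr (1/p)" using sv_N[OF F(1) s1] F by simp
    also have "?W powr (1/p) \<le> ?W powr 1"
      using W_ge1[OF m(1)] p1 by (intro powr_mono) auto
    also have "?W powr 1 = ?W" using W_ge1[OF m(1)] by simp
    finally show ?thesis .
  qed
  have "A (sv F s) j \<le> NP (A (sv F s))"
    using lp_coord[OF bo_D(1)[OF A xF], of j] by linarith
  also have "\<dots> \<le> CA * N (sv F s)" using CA xF by auto
  also have "\<dots> \<le> CA * ?W" using Wb CA by (intro mult_left_mono) auto
  finally have "m * d \<le> CA * ?W" using lo by linarith
  also have "\<dots> \<le> CA * ((d / (2*CA)) * m)" using m CA by (intro mult_left_mono) auto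
  also have "\<dots> = m * d / 2" using CA by (simp add: field_simps)
  finally show False using d m by simp
qed

end



context lor begin

lemma core:
  assumes A: "A \<in> bounded_ops N X NP LP" and c: "0 < c" "\<And>n. c \<le> NP (A (ee n))"
  shows False
proof -
  define y where "y n = A (ee n)" for n
  have yLP: "y n \<in> LP" for n unfolding y_def by (rule bo_D(1)[OF A ee_X])
  have ysum: "summable (\<lambda>j. \<bar>y n j\<bar> powr p)" for n using yLP[of n] unfolding lp_space_def by auto
  define P where "P n J = (\<Sum>j<J. \<bar>y n j\<bar> powr p)" for n J
  have Pmono: "P n J \<le> P n J'" if "J \<le> J'" for n J J'
    unfolding P_def by (rule sum_mono2) (use that in auto)
  have PQ: "P n J \<le> Q (y n)" for n J
    unfolding P_def by (rule sum_le_suminf[OF ysum]) auto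
  have Pnn: "0 \<le> P n J" for n J unfolding P_def by (auto intro: sum_nonneg)
  define c0 where "c0 = c powr p"
  have c0: "0 < c0" unfolding c0_def using c by simp
  have Qy: "c0 \<le> Q (y n)" for n
  proof -
    have "c powr p \<le> NP (y n) powr p" using c(2)[of n] c(1) p0 unfolding y_def by (intro powr_mono2) auto
    thus ?thesis unfolding c0_def using lp_Q[OF yLP] by simp
  qed
  obtain CA where CA: "CA > 0" "\<forall>x\<in>X. NP (A x) \<le> CA * N x" using bo_constP[OF A] by blast
  define t where "t = (2::real) powr (-p)"
  have t: "0 < t" "t * 2 powr p = 1" unfolding t_def by (auto simp: powr_add[symmetric])
  define c1 where "c1 = t * c0 / 4"
  have c1: "0 < c1" unfolding c1_def using t c0 by simp
  have CAp: "0 < CA powr p" using CA by simp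
  obtain m where m: "1 \<le> m" "(\<Sum>n<m. w n) \<le> (c1 / (2 * CA powr p)) * real m"
    using cesaro[of "c1 / (2 * CA powr p)" 0] c1 CAp by auto
  define mp where "mp = real m powr p"
  have mp: "0 \<le> mp" unfolding mp_def by simp
  define eta where "eta = min (c0/4) (t * c0 / (4 * (mp * m + 1)))"
  have eta: "0 < eta" "eta \<le> c0/4" "eta \<le> t * c0 / (4 * (mp * m + 1))"
  proof -
    have "0 \<le> mp * m" using mp by simp
    hence "0 < t * c0 / (4 * (mp * m + 1))" using c0 t by (intro divide_pos_pos) auto
    thus "0 < eta" unfolding eta_def using c0 by simp
    show "eta \<le> c0/4" unfolding eta_def by (rule min.cobounded1)
    show "eta \<le> t * c0 / (4 * (mp * m + 1))" unfolding eta_def by (rule min.cobounded2)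
  qed
  define R where "R n0 J n' J' \<longleftrightarrow> n0 < n' \<and> P n' J < eta \<and> J \<le> J' \<and> Q (y n') - eta < P n' J'" for n0 J n' J'
  have stepex: "\<exists>z. R n0 J (fst z) (snd z)" for n0 J
  proof -
    have tl: "(\<lambda>n. P n J) \<longlonglongrightarrow> 0" unfolding P_def
    proof (rule tendsto_null_sum)
      fix j
      have "(\<lambda>n. y n j) \<longlonglongrightarrow> 0" unfolding y_def by (rule coord_to_0[OF A])
      hence "(\<lambda>n. \<bar>y n j\<bar>) \<longlonglongrightarrow> 0" by (rule tendsto_rabs_zero)
      thus "(\<lambda>n. \<bar>y n j\<bar> powr p) \<longlonglongrightarrow> 0"
        by (rule tendsto_zero_powrI) (use p0 in auto)
    qed
    then obtain N1 where N1: "\<forall>n\<ge>N1. norm (P n J - 0) < eta" using eta(1) unfolding LIMSEQ_iff by blast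
    define n' where "n' = max N1 (Suc n0)"
    have "\<bar>P n' J\<bar> < eta" using N1 unfolding n'_def by auto
    hence h1: "P n' J < eta" by linarith
    have "(\<lambda>J. P n' J) \<longlonglongrightarrow> Q (y n')" unfolding P_def by (rule summable_LIMSEQ[OF ysum])
    then obtain J0 where J0: "\<forall>J\<ge>J0. norm (P n' J - Q (y n')) < eta" using eta(1) unfolding LIMSEQ_iff by blast
    define J' where "J' = max J J0"
    have "\<bar>P n' J' - Q (y n')\<bar> < eta" using J0 unfolding J'_def by auto
    hence h2: "Q (y n') - eta < P n' J'" by linarith
    have "R n0 J n' J'" unfolding R_def using h1 h2 n'_def J'_def by auto
    thus ?thesis by (intro exI[of _ "(n', J')"]) simp
  qed
  define stp where "stp st = (SOME z. R (fst st) (snd st) (fst z) (snd z))" for st :: "nat \<times> nat"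
  have stpR: "R (fst st) (snd st) (fst (stp st)) (snd (stp st))" for st
    unfolding stp_def by (rule someI_ex[OF stepex])
  define h where "h k = (stp ^^ k) (0,0)" for k
  have hS: "h (Suc k) = stp (h k)" for k unfolding h_def by simp
  define nk where "nk k = fst (h (Suc k))" for k
  define Jk where "Jk k = snd (h k)" for k
  have Rk: "R (fst (h k)) (Jk k) (nk k) (Jk (Suc k))" for k
    unfolding nk_def Jk_def hS using stpR by simp
  have head: "P (nk k) (Jk k) < eta" for k using Rk[of k] unfolding R_def by auto
  have tail: "Q (y (nk k)) - eta < P (nk k) (Jk (Suc k))" for k using Rk[of k] unfolding R_def by auto
  have Jstep: "Jk k \<le> Jk (Suc k)" for k using Rk[of k] unfolding R_def by auto
  have J0: "Jk 0 = 0" unfolding Jk_def h_def by simp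
  have Jmono: "Jk i \<le> Jk k" if "i \<le> k" for i k using lift_Suc_mono_le[of Jk, OF Jstep that] .
  have nstep: "nk k < nk (Suc k)" for k
    using Rk[of "Suc k"] unfolding R_def nk_def by auto
  have smn: "strict_mono nk" unfolding strict_mono_Suc_iff using nstep by auto
  have injn: "inj nk" using strict_mono_imp_inj_on[OF smn] .
  define F where "F = nk ` {..<m}"
  have injm: "inj_on nk {..<m}" using injn by (rule inj_on_subset) auto
  have F: "finite F" "card F = m" unfolding F_def using card_image[OF injm] by auto
  have s1: "\<And>k. k \<in> F \<Longrightarrow> \<bar>(\<lambda>_. 1::real) k\<bar> = 1" by simp
  have xF: "sv F (\<lambda>_. 1) \<in> X" using sv_X[of F "\<lambda>_. 1"] F(1) by simp
  define z where "z = A (sv F (\<lambda>_. 1))"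
  have zLP: "z \<in> LP" unfolding z_def by (rule bo_D(1)[OF A xF])
  have zj: "z j = (\<Sum>i<m. y (nk i) j)" for j
  proof -
    have "z j = (\<Sum>n\<in>F. 1 * A (ee n) j)" unfolding z_def by (rule lin_sum[OF A F(1) s1])
    also have "\<dots> = (\<Sum>i<m. y (nk i) j)" unfolding F_def y_def
      by (subst sum.reindex[OF injm]) auto
    finally show ?thesis .
  qed
  have up: "Q z \<le> c1 * m / 2"
  proof -
    have "NP z \<le> CA * N (sv F (\<lambda>_. 1))" using CA xF unfolding z_def by auto
    hence "Q z \<le> (CA * N (sv F (\<lambda>_. 1))) powr p" by (rule Q_le_NP[OF zLP])
    also have "\<dots> = CA powr p * N (sv F (\<lambda>_. 1)) powr p" using CA by (simp add: powr_mult)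
    also have "N (sv F (\<lambda>_. 1)) powr p = (\<Sum>n<m. w n)"
      using signs_X(2)[of F "\<lambda>_. 1"] F unfolding sv_def by simp
    also have "CA powr p * (\<Sum>n<m. w n) \<le> CA powr p * ((c1 / (2 * CA powr p)) * real m)"
      using m CAp by (intro mult_left_mono) auto
    also have "\<dots> = c1 * m / 2" using CAp by (simp add: field_simps)
    finally show ?thesis .
  qed
  have blk: "c1 \<le> (\<Sum>j\<in>{Jk k..<Jk (Suc k)}. \<bar>z j\<bar> powr p)" if km: "k < m" for k
  proof -
    define B where "B = {Jk k..<Jk (Suc k)}"
    define I' where "I' = {..<m} - {k}"
    have I': "finite I'" "card I' \<le> m" unfolding I'_def
      using card_mono[of "{..<m}" "{..<m}-{k}"] by auto
    have pw: "t * \<bar>y (nk k) j\<bar> powr p - mp * (\<Sum>i\<in>I'. \<bar>y (nk i) j\<bar> powr p) \<le> \<bar>z j\<bar> powr p" for j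
    proof -
      define r where "r = (\<Sum>i\<in>I'. y (nk i) j)"
      have zr: "z j = y (nk k) j + r" unfolding zj r_def I'_def using km
        by (simp add: sum.remove[of "{..<m}" k])
      have "\<bar>y (nk k) j\<bar> powr p = \<bar>z j + (- r)\<bar> powr p" using zr by simp
      also have "\<dots> \<le> 2 powr p * (\<bar>z j\<bar> powr p + \<bar>-r\<bar> powr p)" by (rule abs_add_powr) (use p0 in auto)
      finally have a: "\<bar>y (nk k) j\<bar> powr p \<le> 2 powr p * (\<bar>z j\<bar> powr p + \<bar>r\<bar> powr p)" by simp
      have "\<bar>r\<bar> powr p \<le> real (card I') powr p * (\<Sum>i\<in>I'. \<bar>y (nk i) j\<bar> powr p)"
        unfolding r_def by (rule abs_sum_powr[OF I'(1)]) (use p0 in auto)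
      also have "\<dots> \<le> mp * (\<Sum>i\<in>I'. \<bar>y (nk i) j\<bar> powr p)" unfolding mp_def
        using I'(2) p0 by (intro mult_right_mono powr_mono2) (auto intro: sum_nonneg)
      finally have b: "\<bar>r\<bar> powr p \<le> mp * (\<Sum>i\<in>I'. \<bar>y (nk i) j\<bar> powr p)" .
      have "t * \<bar>y (nk k) j\<bar> powr p \<le> t * (2 powr p * (\<bar>z j\<bar> powr p + \<bar>r\<bar> powr p))"
        using a t by (intro mult_left_mono) auto
      also have "\<dots> = \<bar>z j\<bar> powr p + \<bar>r\<bar> powr p" using t(2) by (simp add: mult.assoc[symmetric])
      finally show ?thesis using b by linarith
    qed
    have sumpw: "t * (\<Sum>j\<in>B. \<bar>y (nk k) j\<bar> powr p) - mp * (\<Sum>i\<in>I'. \<Sum>j\<in>B. \<bar>y (nk i) j\<bar> powr p)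
        \<le> (\<Sum>j\<in>B. \<bar>z j\<bar> powr p)"
    proof -
      have "(\<Sum>j\<in>B. t * \<bar>y (nk k) j\<bar> powr p - mp * (\<Sum>i\<in>I'. \<bar>y (nk i) j\<bar> powr p)) \<le> (\<Sum>j\<in>B. \<bar>z j\<bar> powr p)"
        by (rule sum_mono[OF pw])
      moreover have "(\<Sum>j\<in>B. t * \<bar>y (nk k) j\<bar> powr p - mp * (\<Sum>i\<in>I'. \<bar>y (nk i) j\<bar> powr p))
          = t * (\<Sum>j\<in>B. \<bar>y (nk k) j\<bar> powr p) - mp * (\<Sum>i\<in>I'. \<Sum>j\<in>B. \<bar>y (nk i) j\<bar> powr p)"
        by (simp add: sum_subtractf sum_distrib_left sum.swap[of _ B I'])
      ultimately show ?thesis by simp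
    qed
    have split: "(\<Sum>j\<in>B. \<bar>y n j\<bar> powr p) = P n (Jk (Suc k)) - P n (Jk k)" for n
      unfolding B_def P_def using split_lessThan[OF Jstep[of k], of "\<lambda>j. \<bar>y n j\<bar> powr p"] by simp
    have main: "c0 - 2 * eta \<le> (\<Sum>j\<in>B. \<bar>y (nk k) j\<bar> powr p)"
      unfolding split using head[of k] tail[of k] Qy[of "nk k"] by linarith
    have other: "(\<Sum>j\<in>B. \<bar>y (nk i) j\<bar> powr p) \<le> eta" if i: "i \<in> I'" for i
    proof (cases "i < k")
      case True
      have "Jk (Suc i) \<le> Jk k" using True by (intro Jmono) auto
      hence "P (nk i) (Jk (Suc i)) \<le> P (nk i) (Jk k)" by (rule Pmono)
      thus ?thesis unfolding split using tail[of i] PQ[of "nk i" "Jk (Suc k)"] by linarith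
    next
      case False
      hence ki: "Suc k \<le> i" using i unfolding I'_def by auto
      have "(\<Sum>j\<in>B. \<bar>y (nk i) j\<bar> powr p) \<le> P (nk i) (Jk i)"
        unfolding B_def P_def by (rule sum_mono2) (use Jmono[OF ki] in auto)
      thus ?thesis using head[of i] by linarith
    qed
    have "(\<Sum>i\<in>I'. \<Sum>j\<in>B. \<bar>y (nk i) j\<bar> powr p) \<le> (\<Sum>i\<in>I'. eta)" by (rule sum_mono[OF other])
    also have "\<dots> \<le> m * eta" using I'(2) eta(1) by (simp add: mult_right_mono)
    finally have oth: "(\<Sum>i\<in>I'. \<Sum>j\<in>B. \<bar>y (nk i) j\<bar> powr p) \<le> m * eta" .
    have "t * (c0 - 2 * eta) \<le> t * (\<Sum>j\<in>B. \<bar>y (nk k) j\<bar> powr p)" using main t by (intro mult_left_mono) auto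
    moreover have "mp * (\<Sum>i\<in>I'. \<Sum>j\<in>B. \<bar>y (nk i) j\<bar> powr p) \<le> mp * (m * eta)"
      using oth mp by (intro mult_left_mono) auto
    ultimately have L: "t * (c0 - 2 * eta) - mp * (m * eta) \<le> (\<Sum>j\<in>B. \<bar>z j\<bar> powr p)" using sumpw by linarith
    have e1: "t * c0 / 2 \<le> t * (c0 - 2 * eta)" using eta(2) t by (simp add: field_simps)
    have "(mp * m + 1) * eta \<le> (mp * m + 1) * (t * c0 / (4 * (mp * m + 1)))"
      using eta(3) mp by (intro mult_left_mono) auto
    also have "\<dots> = t * c0 / 4"
    proof -
      have "0 \<le> mp * m" using mp by simp
      hence "mp * m + 1 \<noteq> 0" by linarith
      thus ?thesis by (simp add: field_simps)
    qed
    finally have e2: "mp * (m * eta) \<le> t * c0 / 4" using eta(1) by (simp add: algebra_simps)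
    show ?thesis using L e1 e2 unfolding c1_def B_def by linarith
  qed
  have "real m * c1 = (\<Sum>k<m. c1)" by simp
  also have "\<dots> \<le> (\<Sum>k<m. \<Sum>j\<in>{Jk k..<Jk (Suc k)}. \<bar>z j\<bar> powr p)" by (rule sum_mono) (use blk in auto)
  also have "\<dots> = (\<Sum>j<Jk m. \<bar>z j\<bar> powr p)" by (rule sum_blocks[OF Jstep J0, symmetric])
  also have "\<dots> \<le> Q z" using zLP unfolding lp_space_def by (intro sum_le_suminf) auto
  finally have "real m * c1 \<le> Q z" .
  with up have "real m * c1 \<le> c1 * m / 2" by linarith
  thus False using c1 m(1) by (simp add: field_simps)
qed

end



context lor begin

abbreviation "JJ \<equiv> factor_lp w p"
abbreviation "CL \<equiv> op_closure N X JJ"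

lemma bo_scaleY: assumes T: "T \<in> bounded_ops NY Y N X" shows "(\<lambda>y. sscale c (T y)) \<in> bounded_ops NY Y N X"
proof -
  obtain C where C: "\<forall>x\<in>Y. N (T x) \<le> C * NY x" using T unfolding bounded_ops_def by blast
  have mT: "\<forall>x\<in>Y. T x \<in> X" using T unfolding bounded_ops_def by auto
  show ?thesis
  proof (rule bo_I[where C="\<bar>c\<bar> * C"])
    fix x assume x: "x \<in> Y"
    show "sscale c (T x) \<in> X" using x mT scale_X(1) by auto
    show "N (sscale c (T x)) \<le> \<bar>c\<bar> * C * NY x" using scale_X(2) mT C x
      by (auto simp: mult.assoc intro: mult_left_mono)
    fix y assume y: "y \<in> Y"
    show "sscale c (T (splus x y)) = splus (sscale c (T x)) (sscale c (T y))"
      using x y bo_D(2)[OF T] by (simp add: splus_def sscale_def fun_eq_iff algebra_simps)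
  next
    fix d x assume x: "x \<in> Y"
    show "sscale c (T (sscale d x)) = sscale d (sscale c (T x))"
      using x bo_D(3)[OF T] by (simp add: sscale_def fun_eq_iff algebra_simps)
  next
    fix x assume "x \<notin> Y"
    thus "sscale c (T x) = szero" using bo_D(4)[OF T] by (simp add: sscale_def szero_def)
  qed
qed

lemma bo_zero_op: assumes "szero \<in> Y" "NY szero = 0" "\<And>x. 0 \<le> NX x"
  shows "(\<lambda>x. szero) \<in> bounded_ops NX X1 NY Y"
  by (rule bo_I[where C=0]) (use assms in \<open>auto simp: splus_def sscale_def szero_def\<close>)

lemma JJ_L: "JJ \<subseteq> L"
proof
  fix T assume "T \<in> JJ"
  then obtain A B where T: "T = B \<circ> A" and A: "A \<in> bounded_ops N X NP LP" and B: "B \<in> bounded_ops NP LP N X"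
    unfolding factor_lp_def by blast
  show "T \<in> L" unfolding T by (rule bo_comp[OF A B lp_szero(1) NP_nonneg])
qed

lemma JJ_zero: "(\<lambda>x. szero) \<in> JJ"
proof -
  have A: "(\<lambda>x. szero) \<in> bounded_ops N X NP LP" by (rule bo_zero_op) (use lp_szero N_nonneg in auto)
  have B: "(\<lambda>x. szero) \<in> bounded_ops NP LP N X" by (rule bo_zero_op) (use szero_X N_szero NP_nonneg in auto)
  have "(\<lambda>x. szero) = (\<lambda>x. szero) \<circ> (\<lambda>x::seq. szero)" by auto
  thus ?thesis unfolding factor_lp_def using A B by blast
qed

lemma JJ_scale: assumes "T \<in> JJ" shows "(\<lambda>x. sscale c (T x)) \<in> JJ"
proof -
  obtain A B where T: "T = B \<circ> A" and A: "A \<in> bounded_ops N X NP LP" and B: "B \<in> bounded_ops NP LP N X"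
    using assms unfolding factor_lp_def by blast
  have "(\<lambda>x. sscale c (T x)) = (\<lambda>y. sscale c (B y)) \<circ> A" unfolding T by auto
  thus ?thesis unfolding factor_lp_def using A bo_scaleY[OF B] by blast
qed

lemma JJ_comp: assumes "T \<in> JJ" "A0 \<in> L" "B0 \<in> L" shows "A0 \<circ> T \<circ> B0 \<in> JJ"
proof -
  obtain A B where T: "T = B \<circ> A" and A: "A \<in> bounded_ops N X NP LP" and B: "B \<in> bounded_ops NP LP N X"
    using assms unfolding factor_lp_def by blast
  have e: "A0 \<circ> T \<circ> B0 = (A0 \<circ> B) \<circ> (A \<circ> B0)" unfolding T by auto
  have 1: "A \<circ> B0 \<in> bounded_ops N X NP LP" by (rule bo_comp[OF assms(3) A szero_X N_nonneg])
  have 2: "A0 \<circ> B \<in> bounded_ops NP LP N X" by (rule bo_comp[OF B assms(2) szero_X N_nonneg])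
  show ?thesis unfolding e factor_lp_def using 1 2 by blast
qed

lemma JJ_add: assumes S: "S \<in> JJ" and T: "T \<in> JJ" shows "(\<lambda>x. splus (S x) (T x)) \<in> JJ"
proof -
  obtain A1 B1 where S: "S = B1 \<circ> A1" and A1: "A1 \<in> bounded_ops N X NP LP" and B1: "B1 \<in> bounded_ops NP LP N X"
    using assms unfolding factor_lp_def by blast
  obtain A2 B2 where T: "T = B2 \<circ> A2" and A2: "A2 \<in> bounded_ops N X NP LP" and B2: "B2 \<in> bounded_ops NP LP N X"
    using assms unfolding factor_lp_def by blast
  obtain C1 where C1: "C1 > 0" "\<forall>x\<in>X. NP (A1 x) \<le> C1 * N x" using bo_constP[OF A1] by blast
  obtain C2 where C2: "C2 > 0" "\<forall>x\<in>X. NP (A2 x) \<le> C2 * N x" using bo_constP[OF A2] by blast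
  obtain D1 where D1: "D1 > 0" "\<forall>y\<in>LP. N (B1 y) \<le> D1 * NP y" using bo_const[OF B1 NP_nonneg] by blast
  obtain D2 where D2: "D2 > 0" "\<forall>y\<in>LP. N (B2 y) \<le> D2 * NP y" using bo_const[OF B2 NP_nonneg] by blast
  define A where "A x = il (A1 x) (A2 x)" for x
  define B where "B y = (if y \<in> LP then splus (B1 (evs y)) (B2 (ods y)) else szero)" for y
  have A: "A \<in> bounded_ops N X NP LP"
  proof (rule bo_I[where C="2 powr (1/p) * (C1 + C2)"])
    fix x assume x: "x \<in> X"
    have a1: "A1 x \<in> LP" and a2: "A2 x \<in> LP" using bo_D(1)[OF A1 x] bo_D(1)[OF A2 x] .
    show "A x \<in> LP" unfolding A_def by (rule lp_il(1)[OF a1 a2])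
    have q1: "Q (A1 x) \<le> (C1 * N x) powr p" by (rule Q_le_NP[OF a1]) (use C1 x in auto)
    have q2: "Q (A2 x) \<le> (C2 * N x) powr p" by (rule Q_le_NP[OF a2]) (use C2 x in auto)
    have "(C1 * N x) powr p \<le> ((C1 + C2) * N x) powr p" "(C2 * N x) powr p \<le> ((C1 + C2) * N x) powr p"
      using C1 C2 N_nonneg[of x] p0 by (auto intro!: powr_mono2 mult_right_mono)
    hence "Q (A x) \<le> 2 * ((C1 + C2) * N x) powr p" unfolding A_def using lp_il(2)[OF a1 a2] q1 q2 by linarith
    also have "\<dots> = (2 powr (1/p) * (C1 + C2) * N x) powr p"
      using C1 C2 N_nonneg[of x] p0 by (simp add: powr_mult powr_powr mult.assoc)
    finally have qq: "Q (A x) \<le> (2 powr (1/p) * (C1 + C2) * N x) powr p" .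
    show "NP (A x) \<le> 2 powr (1/p) * (C1 + C2) * N x"
      using Q_le_iff[OF \<open>A x \<in> LP\<close> _ qq] C1 C2 N_nonneg[of x] by auto
    fix y assume y: "y \<in> X"
    show "A (splus x y) = splus (A x) (A y)"
      unfolding A_def using bo_D(2)[OF A1 x y] bo_D(2)[OF A2 x y] by (auto simp: il_def splus_def fun_eq_iff)
  next
    fix c x assume x: "x \<in> X"
    show "A (sscale c x) = sscale c (A x)"
      unfolding A_def using bo_D(3)[OF A1 x] bo_D(3)[OF A2 x] by (auto simp: il_def sscale_def fun_eq_iff)
  next
    fix x assume "x \<notin> X"
    thus "A x = szero" unfolding A_def using bo_D(4)[OF A1] bo_D(4)[OF A2] il_zero by simp
  qed
  have evs_add: "evs (splus y z) = splus (evs y) (evs z)" "ods (splus y z) = splus (ods y) (ods z)" for y z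
    by (auto simp: evs_def ods_def splus_def)
  have evs_sc: "evs (sscale c y) = sscale c (evs y)" "ods (sscale c y) = sscale c (ods y)" for c y
    by (auto simp: evs_def ods_def sscale_def)
  have B: "B \<in> bounded_ops NP LP N X"
  proof (rule bo_I[where C="KX * (D1 + D2)"])
    fix y assume y: "y \<in> LP"
    have e1: "evs y \<in> LP" "ods y \<in> LP" using lp_evs[OF y] by auto
    have m1: "B1 (evs y) \<in> X" "B2 (ods y) \<in> X" using bo_D(1)[OF B1 e1(1)] bo_D(1)[OF B2 e1(2)] .
    show "B y \<in> X" unfolding B_def using y add_X(1)[OF m1] by simp
    have "N (B y) \<le> KX * (N (B1 (evs y)) + N (B2 (ods y)))" unfolding B_def using y add_X(2)[OF m1] by simp
    also have "\<dots> \<le> KX * (D1 * NP (evs y) + D2 * NP (ods y))"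
      using D1 D2 e1 KX_pos by (intro mult_left_mono add_mono) auto
    also have "\<dots> \<le> KX * (D1 * NP y + D2 * NP y)"
      using D1 D2 lp_evs[OF y] KX_pos by (intro mult_left_mono add_mono) auto
    finally show "N (B y) \<le> KX * (D1 + D2) * NP y" by (simp add: algebra_simps)
    fix z assume z: "z \<in> LP"
    have e2: "evs z \<in> LP" "ods z \<in> LP" using lp_evs[OF z] by auto
    have yz: "splus y z \<in> LP" using lp_add[OF y z] .
    have "B (splus y z) = splus (B1 (evs (splus y z))) (B2 (ods (splus y z)))" using yz by (simp add: B_def)
    also have "\<dots> = splus (B1 (splus (evs y) (evs z))) (B2 (splus (ods y) (ods z)))" by (simp only: evs_add)
    also have "\<dots> = splus (splus (B1 (evs y)) (B1 (evs z))) (splus (B2 (ods y)) (B2 (ods z)))"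
      using bo_D(2)[OF B1 e1(1) e2(1)] bo_D(2)[OF B2 e1(2) e2(2)] by simp
    also have "\<dots> = splus (B y) (B z)" using y z by (simp add: B_def splus_def fun_eq_iff algebra_simps)
    finally show "B (splus y z) = splus (B y) (B z)" .
  next
    fix c y assume y: "y \<in> LP"
    have e1: "evs y \<in> LP" "ods y \<in> LP" using lp_evs[OF y] by auto
    have "B (sscale c y) = splus (B1 (evs (sscale c y))) (B2 (ods (sscale c y)))" using lp_scale[OF y] by (simp add: B_def)
    also have "\<dots> = splus (B1 (sscale c (evs y))) (B2 (sscale c (ods y)))" by (simp only: evs_sc)
    also have "\<dots> = splus (sscale c (B1 (evs y))) (sscale c (B2 (ods y)))"
      using bo_D(3)[OF B1 e1(1)] bo_D(3)[OF B2 e1(2)] by simp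
    also have "\<dots> = sscale c (B y)" using y by (simp add: B_def splus_def sscale_def fun_eq_iff algebra_simps)
    finally show "B (sscale c y) = sscale c (B y)" .
  next
    fix y assume "y \<notin> LP" thus "B y = szero" unfolding B_def by simp
  qed
  have eq: "(\<lambda>x. splus (S x) (T x)) = B \<circ> A"
  proof
    fix x show "splus (S x) (T x) = (B \<circ> A) x"
    proof (cases "x \<in> X")
      case True
      have "A x \<in> LP" using bo_D(1)[OF A True] .
      thus ?thesis unfolding S T B_def A_def by simp
    next
      case False
      have z: "A1 x = szero" "A2 x = szero" using bo_D(4)[OF A1 False] bo_D(4)[OF A2 False] by auto
      have ez: "evs szero = szero" "ods szero = szero" by (auto simp: evs_def ods_def szero_def)
      show ?thesis using lp_szero(1) ez z il_zero
        bo_zero[OF B1 lp_szero(1)] bo_zero[OF B2 lp_szero(1)] by (simp add: S T B_def A_def splus_def szero_def)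
    qed
  qed
  show ?thesis unfolding eq factor_lp_def using A B by blast
qed

lemma JJ_ideal: "is_op_ideal N X JJ"
  unfolding is_op_ideal_def using JJ_L JJ_zero JJ_add JJ_scale JJ_comp by blast

lemma opn_zero_diff: assumes "S \<in> L" shows "op_norm N X N (\<lambda>x. sminus (S x) (S x)) \<le> 0"
proof (rule opn_bound)
  fix x have "sminus (S x) (S x) = szero" by (auto simp: sminus_def szero_def)
  thus "N (sminus (S x) (S x)) \<le> 0 * N x" using N_szero by simp
qed simp

lemma JJ_CL: "JJ \<subseteq> CL"
  unfolding op_closure_def using JJ_L opn_zero_diff by force

lemma CL_D: assumes "T \<in> CL" "0 < e" obtains S where "S \<in> JJ" "\<And>x. x \<in> X \<Longrightarrow> N (sminus (T x) (S x)) \<le> e * N x"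
proof -
  obtain S where S: "S \<in> JJ" "op_norm N X N (\<lambda>x. sminus (T x) (S x)) < e"
    using assms unfolding op_closure_def by blast
  have T: "T \<in> L" using assms unfolding op_closure_def by blast
  have D: "(\<lambda>x. sminus (T x) (S x)) \<in> L" using L_minus[OF T] JJ_L S(1) by blast
  show ?thesis using that[OF S(1)] opn_le[OF D S(2)] by blast
qed

lemma CL_I: assumes "T \<in> L" "\<And>e. 0 < e \<Longrightarrow> \<exists>S\<in>JJ. \<exists>c. 0 \<le> c \<and> c < e \<and> (\<forall>x\<in>X. N (sminus (T x) (S x)) \<le> c * N x)"
  shows "T \<in> CL"
  unfolding op_closure_def
proof (intro CollectI conjI allI impI)
  show "T \<in> L" by fact
  fix e :: real assume "0 < e"
  then obtain S c where S: "S \<in> JJ" "0 \<le> c" "c < e" "\<forall>x\<in>X. N (sminus (T x) (S x)) \<le> c * N x" using assms(2) by blast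
  have "op_norm N X N (\<lambda>x. sminus (T x) (S x)) \<le> c" by (rule opn_bound) (use S in auto)
  thus "\<exists>S\<in>JJ. op_norm N X N (\<lambda>x. sminus (T x) (S x)) < e" using S by force
qed

lemma CL_L: "CL \<subseteq> L" unfolding op_closure_def by auto

lemma CL_ideal: "is_op_ideal N X CL"
  unfolding is_op_ideal_def
proof (intro conjI ballI allI)
  show "CL \<subseteq> L" by (rule CL_L)
  show "(\<lambda>x. szero) \<in> CL" using JJ_CL JJ_zero by auto
next
  fix T1 T2 assume T1: "T1 \<in> CL" and T2: "T2 \<in> CL"
  have L1: "T1 \<in> L" "T2 \<in> L" using T1 T2 CL_L by auto
  show "(\<lambda>x. splus (T1 x) (T2 x)) \<in> CL"
  proof (rule CL_I[OF L_add[OF L1]])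
    fix e :: real assume e: "0 < e"
    define e' where "e' = e / (4 * KX)"
    have e': "0 < e'" "2 * KX * e' < e" unfolding e'_def using e KX_pos by (auto simp: field_simps)
    obtain S1 where S1: "S1 \<in> JJ" "\<And>x. x \<in> X \<Longrightarrow> N (sminus (T1 x) (S1 x)) \<le> e' * N x" using CL_D[OF T1 e'(1)] by blast
    obtain S2 where S2: "S2 \<in> JJ" "\<And>x. x \<in> X \<Longrightarrow> N (sminus (T2 x) (S2 x)) \<le> e' * N x" using CL_D[OF T2 e'(1)] by blast
    have "\<forall>x\<in>X. N (sminus (splus (T1 x) (T2 x)) (splus (S1 x) (S2 x))) \<le> (2 * KX * e') * N x"
    proof
      fix x assume x: "x \<in> X"
      have mem: "sminus (T1 x) (S1 x) \<in> X" "sminus (T2 x) (S2 x) \<in> X"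
        using bo_D(1)[OF L_minus[OF L1(1) JJ_L[THEN subsetD, OF S1(1)]] x]
          bo_D(1)[OF L_minus[OF L1(2) JJ_L[THEN subsetD, OF S2(1)]] x] by auto
      have eq: "sminus (splus (T1 x) (T2 x)) (splus (S1 x) (S2 x)) = splus (sminus (T1 x) (S1 x)) (sminus (T2 x) (S2 x))"
        by (auto simp: sminus_def splus_def)
      have "N (splus (sminus (T1 x) (S1 x)) (sminus (T2 x) (S2 x))) \<le> KX * (N (sminus (T1 x) (S1 x)) + N (sminus (T2 x) (S2 x)))"
        by (rule add_X(2)[OF mem])
      also have "\<dots> \<le> KX * (e' * N x + e' * N x)" using S1(2)[OF x] S2(2)[OF x] KX_pos
        by (intro mult_left_mono add_mono) auto
      finally show "N (sminus (splus (T1 x) (T2 x)) (splus (S1 x) (S2 x))) \<le> (2 * KX * e') * N x"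
        unfolding eq by (simp add: algebra_simps)
    qed
    thus "\<exists>S\<in>JJ. \<exists>c\<ge>0. c < e \<and> (\<forall>x\<in>X. N (sminus (splus (T1 x) (T2 x)) (S x)) \<le> c * N x)"
      using JJ_add[OF S1(1) S2(1)] e' KX_pos by (intro bexI[of _ "\<lambda>x. splus (S1 x) (S2 x)"] exI[of _ "2 * KX * e'"]) auto
  qed
next
  fix c :: real and T assume T: "T \<in> CL"
  have LT: "T \<in> L" using T CL_L by auto
  show "(\<lambda>x. sscale c (T x)) \<in> CL"
  proof (rule CL_I[OF L_scale[OF LT]])
    fix e :: real assume e: "0 < e"
    define e' where "e' = e / (2 * (\<bar>c\<bar> + 1))"
    have d: "0 < 2 * (\<bar>c\<bar> + 1)" by simp
    have e'0: "0 < e'" unfolding e'_def using e d by simp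
    have "\<bar>c\<bar> * e' \<le> (\<bar>c\<bar> + 1) * e'" using e'0 by simp
    also have "\<dots> = e / 2"
    proof -
      have "2 * \<bar>c\<bar> + 2 \<noteq> 0" "\<bar>c\<bar> + 1 \<noteq> 0" by linarith+
      thus ?thesis unfolding e'_def by (simp add: field_simps)
    qed
    finally have e': "0 < e'" "\<bar>c\<bar> * e' < e" using e e'0 by auto
    obtain S where S: "S \<in> JJ" "\<And>x. x \<in> X \<Longrightarrow> N (sminus (T x) (S x)) \<le> e' * N x" using CL_D[OF T e'(1)] by blast
    have "\<forall>x\<in>X. N (sminus (sscale c (T x)) (sscale c (S x))) \<le> (\<bar>c\<bar> * e') * N x"
    proof
      fix x assume x: "x \<in> X"
      have mem: "sminus (T x) (S x) \<in> X"
        using bo_D(1)[OF L_minus[OF LT JJ_L[THEN subsetD, OF S(1)]] x] by auto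
      have eq: "sminus (sscale c (T x)) (sscale c (S x)) = sscale c (sminus (T x) (S x))"
        by (auto simp: sminus_def sscale_def algebra_simps)
      show "N (sminus (sscale c (T x)) (sscale c (S x))) \<le> (\<bar>c\<bar> * e') * N x"
        unfolding eq scale_X(2)[OF mem] using S(2)[OF x] by (simp add: mult.assoc mult_left_mono)
    qed
    thus "\<exists>S\<in>JJ. \<exists>d\<ge>0. d < e \<and> (\<forall>x\<in>X. N (sminus (sscale c (T x)) (S x)) \<le> d * N x)"
      using JJ_scale[OF S(1)] e' by (intro bexI[of _ "\<lambda>x. sscale c (S x)"] exI[of _ "\<bar>c\<bar> * e'"]) auto
  qed
next
  fix T A0 B0 assume T: "T \<in> CL" and A0: "A0 \<in> L" and B0: "B0 \<in> L"
  have LT: "T \<in> L" using T CL_L by auto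
  obtain CA where CA: "CA > 0" "\<forall>x\<in>X. N (A0 x) \<le> CA * N x" using bo_const[OF A0 N_nonneg] by blast
  obtain CB where CB: "CB > 0" "\<forall>x\<in>X. N (B0 x) \<le> CB * N x" using bo_const[OF B0 N_nonneg] by blast
  show "A0 \<circ> T \<circ> B0 \<in> CL"
  proof (rule CL_I)
    show "A0 \<circ> T \<circ> B0 \<in> L" by (rule bo_comp[OF B0 bo_comp[OF LT A0 szero_X N_nonneg] szero_X N_nonneg])
    fix e :: real assume e: "0 < e"
    define e' where "e' = e / (2 * (CA * CB))"
    have e': "0 < e'" "CA * CB * e' < e" unfolding e'_def using e CA CB by (auto simp: field_simps)
    obtain S where S: "S \<in> JJ" "\<And>x. x \<in> X \<Longrightarrow> N (sminus (T x) (S x)) \<le> e' * N x" using CL_D[OF T e'(1)] by blast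
    have LS: "S \<in> L" using JJ_L S(1) by auto
    have "\<forall>x\<in>X. N (sminus ((A0 \<circ> T \<circ> B0) x) ((A0 \<circ> S \<circ> B0) x)) \<le> (CA * CB * e') * N x"
    proof
      fix x assume x: "x \<in> X"
      have bx: "B0 x \<in> X" using bo_D(1)[OF B0 x] .
      have tb: "T (B0 x) \<in> X" "S (B0 x) \<in> X" using bo_D(1)[OF LT bx] bo_D(1)[OF LS bx] by auto
      have mem: "sminus (T (B0 x)) (S (B0 x)) \<in> X"
        using bo_D(1)[OF L_minus[OF LT LS] bx] by auto
      have "A0 (sminus (T (B0 x)) (S (B0 x))) = A0 (splus (T (B0 x)) (sscale (-1) (S (B0 x))))"
        by (simp add: sminus_eq)
      also have "\<dots> = splus (A0 (T (B0 x))) (A0 (sscale (-1) (S (B0 x))))"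
        by (rule bo_D(2)[OF A0 tb(1) scale_X(1)[OF tb(2)]])
      also have "\<dots> = sminus (A0 (T (B0 x))) (A0 (S (B0 x)))"
        using bo_D(3)[OF A0 tb(2)] by (simp add: sminus_eq)
      finally have eq: "sminus ((A0 \<circ> T \<circ> B0) x) ((A0 \<circ> S \<circ> B0) x) = A0 (sminus (T (B0 x)) (S (B0 x)))" by simp
      have "N (A0 (sminus (T (B0 x)) (S (B0 x)))) \<le> CA * N (sminus (T (B0 x)) (S (B0 x)))" using CA mem by auto
      also have "\<dots> \<le> CA * (e' * N (B0 x))" using S(2)[OF bx] CA by (intro mult_left_mono) auto
      also have "\<dots> \<le> CA * (e' * (CB * N x))" using CB x CA e' by (intro mult_left_mono) auto
      finally show "N (sminus ((A0 \<circ> T \<circ> B0) x) ((A0 \<circ> S \<circ> B0) x)) \<le> (CA * CB * e') * N x"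
        unfolding eq by (simp add: algebra_simps)
    qed
    thus "\<exists>S'\<in>JJ. \<exists>c\<ge>0. c < e \<and> (\<forall>x\<in>X. N (sminus ((A0 \<circ> T \<circ> B0) x) (S' x)) \<le> c * N x)"
      using JJ_comp[OF S(1) A0 B0] e' CA CB by (intro bexI[of _ "A0 \<circ> S \<circ> B0"] exI[of _ "CA * CB * e'"]) auto
  qed
qed

lemma Id_not_CL: "Id_X \<notin> CL"
proof
  assume "Id_X \<in> CL"
  then obtain S where S: "S \<in> JJ" "\<And>x. x \<in> X \<Longrightarrow> N (sminus (Id_X x) (S x)) \<le> (1/2) * N x"
    using CL_D[of Id_X "1/2"] by auto
  obtain A B where ST: "S = B \<circ> A" and A: "A \<in> bounded_ops N X NP LP" and B: "B \<in> bounded_ops NP LP N X"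
    using S(1) unfolding factor_lp_def by blast
  obtain CB where CB: "CB > 0" "\<forall>y\<in>LP. N (B y) \<le> CB * NP y" using bo_const[OF B NP_nonneg] by blast
  have "1 / (2 * CB) \<le> NP (A (ee n))" for n
  proof -
    have d: "N (sminus (ee n) (S (ee n))) \<le> 1/2" using S(2)[OF ee_X, of n] ee_N ee_X
      by (simp add: Id_X_def)
    have dm: "sminus (ee n) (S (ee n)) \<in> X"
      using bo_D(1)[OF L_minus[OF Id_L JJ_L[THEN subsetD, OF S(1)]] ee_X, of n] by (simp add: Id_X_def ee_X)
    have "\<bar>sminus (ee n) (S (ee n)) n\<bar> \<le> 1/2" using coord_le[OF dm, of n] d by linarith
    hence "\<bar>1 - S (ee n) n\<bar> \<le> 1/2" using ee_n[of n] by (simp add: sminus_def)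
    hence "1/2 \<le> S (ee n) n" by arith
    also have "\<dots> \<le> N (S (ee n))"
      using coord_le[OF bo_D(1)[OF JJ_L[THEN subsetD, OF S(1)] ee_X], of n n] by linarith
    also have "\<dots> \<le> CB * NP (A (ee n))" unfolding ST using CB bo_D(1)[OF A ee_X] by auto
    finally show ?thesis using CB by (simp add: field_simps)
  qed
  thus False using core[OF A, of "1/(2*CB)"] CB by auto
qed

lemma final: "proper_op_ideal N X JJ \<and> proper_op_ideal N X CL"
  unfolding proper_op_ideal_def using JJ_ideal CL_ideal Id_not_CL Id_L JJ_CL by blast

end


theorem theorem2p3:
  fixes p :: real and w :: "nat \<Rightarrow> real"
  assumes "1 \<le> p"
    and "w 0 = 1" and "decseq w" and "w \<longlonglongrightarrow> 0" and "\<not> summable w"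
  shows "proper_op_ideal (lorentz_norm w p) (lorentz_space w p) (factor_lp w p)
       \<and> proper_op_ideal (lorentz_norm w p) (lorentz_space w p)
           (op_closure (lorentz_norm w p) (lorentz_space w p) (factor_lp w p))"
proof -
  interpret lor w p by unfold_locales (use assms in auto)
  show ?thesis by (rule final)
qed

end
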